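(* Let $n\ge1$ and $A=\mathbb{C}[[\lambda,q,p]]$ with $\lambda=(\lambda_1,\dots,\lambda_n)$, $q=(q_1,\dots,q_n)$, $p=(p_1,\dots,p_n)$, graded so that $q_i,p_i$ have degree $1$ and $\lambda_i$ have degree $2$, and equipped with the $\mathbb{C}[[\lambda]]$-linear Poisson bracket $\{f,g\}=\sum_{i=1}^n(\partial_{q_i}f\,\partial_{p_i}g-\partial_{p_i}f\,\partial_{q_i}g)$. Let $I\subset A$ be the ideal generated by $p_1q_1-\lambda_1,\dots,p_nq_n-\lambda_n$. Let $H\in A$ satisfy $H=\sum_{i=1}^n\alpha_i p_iq_i+o(2)$ with $\alpha_i\in\mathbb{C}$. If $\alpha_1,\dots,\alpha_n$ are linearly independent over $\mathbb{Q}$, then there exist a Poisson automorphism $\exp$ of $A$ and power series $\widehat{g_1},\dots,\widehat{g_n}\in\mathbb{C}[[\lambda]]$ such that $$\exp(H)-\sum_{i=1}^n(\alpha_i+\widehat{g_i}(\lambda))\,p_iq_i\in I^2+\mathbb{C}[[\lambda]].$$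
   Context: For series $f,g$, $f=g+o(l)$ means that $f-g$ contains only homogeneous terms of degree strictly greater than $l$ for the grading specified. *)

theory Defs
  imports Complex_Main
begin

text \<open>Formal power series A = C[[lambda,q,p]] in 3n variables, the index set of size n
  being a finite type 'n.\<close>

datatype 'n var = Lam 'n | Qv 'n | Pv 'n

type_synonym 'n mon = "'n var \<Rightarrow> nat"
type_synonym 'n ps = "'n mon \<Rightarrow> complex"

definition ps_const :: "complex \<Rightarrow> 'n ps" where
  "ps_const c = (\<lambda>m. if m = (\<lambda>_. 0) then c else 0)"

definition ps_var :: "'n var \<Rightarrow> 'n ps" where
  "ps_var v = (\<lambda>m. if m = (\<lambda>w. if w = v then 1 else 0) then 1 else 0)"

definition ps_add :: "'n ps \<Rightarrow> 'n ps \<Rightarrow> 'n ps" where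
  "ps_add f g = (\<lambda>m. f m + g m)"

definition ps_diff :: "'n ps \<Rightarrow> 'n ps \<Rightarrow> 'n ps" where
  "ps_diff f g = (\<lambda>m. f m - g m)"

text \<open>Cauchy product (the index set of decompositions is finite since 'n is finite).\<close>
definition ps_mult :: "'n ps \<Rightarrow> 'n ps \<Rightarrow> 'n ps" where
  "ps_mult f g = (\<lambda>m. \<Sum>(a,b)\<in>{(a,b). \<forall>v. a v + b v = m v}. f a * g b)"

definition ps_sum :: "('i \<Rightarrow> 'n ps) \<Rightarrow> 'i set \<Rightarrow> 'n ps" where
  "ps_sum F S = (\<lambda>m. \<Sum>i\<in>S. F i m)"

definition ps_deriv :: "'n var \<Rightarrow> 'n ps \<Rightarrow> 'n ps" where
  "ps_deriv v f = (\<lambda>m. of_nat (Suc (m v)) * f (m(v := Suc (m v))))"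

definition poisson :: "'n::finite ps \<Rightarrow> 'n ps \<Rightarrow> 'n ps" where
  "poisson f g = ps_sum (\<lambda>i. ps_diff (ps_mult (ps_deriv (Qv i) f) (ps_deriv (Pv i) g))
                                     (ps_mult (ps_deriv (Pv i) f) (ps_deriv (Qv i) g))) UNIV"

definition mon_deg :: "'n::finite mon \<Rightarrow> nat" where
  "mon_deg m = (\<Sum>i\<in>UNIV. 2 * m (Lam i) + m (Qv i) + m (Pv i))"

definition eq_plus_o :: "nat \<Rightarrow> 'n::finite ps \<Rightarrow> 'n ps \<Rightarrow> bool" where
  "eq_plus_o l f g \<longleftrightarrow> (\<forall>m. mon_deg m \<le> l \<longrightarrow> f m = g m)"

definition lam_series :: "'n ps set" where
  "lam_series = {f. \<forall>m. f m \<noteq> 0 \<longrightarrow> (\<forall>i. m (Qv i) = 0 \<and> m (Pv i) = 0)}"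

definition pq :: "'n \<Rightarrow> 'n ps" where
  "pq i = ps_mult (ps_var (Pv i)) (ps_var (Qv i))"

definition gen :: "'n \<Rightarrow> 'n ps" where
  "gen i = ps_diff (pq i) (ps_var (Lam i))"

definition ideal_I2 :: "'n::finite ps set" where
  "ideal_I2 = {ps_sum (\<lambda>(i,j). ps_mult (a i j) (ps_mult (gen i) (gen j))) UNIV | a. True}"

definition poisson_aut :: "('n::finite ps \<Rightarrow> 'n ps) \<Rightarrow> bool" where
  "poisson_aut \<phi> \<longleftrightarrow> bij \<phi>
     \<and> (\<forall>f g. \<phi> (ps_add f g) = ps_add (\<phi> f) (\<phi> g))
     \<and> (\<forall>f g. \<phi> (ps_mult f g) = ps_mult (\<phi> f) (\<phi> g))
     \<and> \<phi> (ps_const 1) = ps_const 1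
     \<and> (\<forall>c f. c \<in> lam_series \<longrightarrow> \<phi> (ps_mult c f) = ps_mult c (\<phi> f))
     \<and> (\<forall>f g. \<phi> (poisson f g) = poisson (\<phi> f) (\<phi> g))"

end

theory Submission
  imports Defs "HOL-Library.Function_Algebras" "HOL-Library.FuncSet"
begin


instance var :: (finite) finite
proof
  have "(UNIV :: 'a var set) = range Lam \<union> range Qv \<union> range Pv"
    by (auto, case_tac x, auto)
  then show "finite (UNIV :: 'a var set)" by (metis finite_Un finite_imageI finite_class.finite_UNIV)
qed

definition DD :: "'n mon \<Rightarrow> ('n mon \<times> 'n mon) set" where
  "DD m = {(a,b). \<forall>v. a v + b v = m v}"

lemma DD_alt: "DD m = {(a,b). a + b = m}"
  by (auto simp: DD_def fun_eq_iff)

lemma finite_le_mon: "finite {a :: ('n::finite) mon. a \<le> m}"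
proof -
  have "{a :: 'n mon. a \<le> m} = Pi\<^sub>E UNIV (\<lambda>v. {..m v})"
    by (auto simp: PiE_UNIV_domain le_fun_def)
  then show ?thesis by (simp add: finite_PiE)
qed

lemma mon_add_diff: "(a :: 'n mon) \<le> m \<Longrightarrow> a + (m - a) = m"
  by (auto simp: le_fun_def fun_eq_iff)

lemma DD_image: "DD (m :: 'n mon) = (\<lambda>a. (a, m - a)) ` {a. a \<le> m}"
proof -
  have "DD m \<subseteq> (\<lambda>a. (a, m - a)) ` {a. a \<le> m}"
  proof
    fix p assume "p \<in> DD m"
    then obtain a b where p: "p = (a,b)" "a + b = m" by (auto simp: DD_alt)
    then have "a \<le> m" "b = m - a" by (auto simp: le_fun_def fun_eq_iff, metis le_add1, metis diff_add_inverse)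
    then show "p \<in> (\<lambda>a. (a, m - a)) ` {a. a \<le> m}" using p by auto
  qed
  moreover have "(\<lambda>a. (a, m - a)) ` {a. a \<le> m} \<subseteq> DD m" by (auto simp: DD_alt mon_add_diff)
  ultimately show ?thesis by blast
qed

lemma finite_DD: "finite (DD (m :: ('n::finite) mon))"
  by (simp add: DD_image finite_le_mon)

lemma ps_mult_DD: "ps_mult f g m = (\<Sum>(a,b)\<in>DD m. f a * g b)"
  by (simp add: ps_mult_def DD_def)

lemma ps_mult_alt: "ps_mult f g (m :: ('n::finite) mon) = (\<Sum>a\<in>{a. a \<le> m}. f a * g (m - a))"
proof -
  have "inj_on (\<lambda>a. (a, m - a)) {a. a \<le> m}" by (auto simp: inj_on_def)
  then show ?thesis by (simp add: ps_mult_DD DD_image sum.reindex)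
qed

lemma ps_mult_comm: "ps_mult f g = ps_mult g (f :: ('n::finite) ps)"
proof
  fix m :: "'n mon"
  show "ps_mult f g m = ps_mult g f m"
    unfolding ps_mult_DD
    by (rule sum.reindex_bij_witness[of _ prod.swap prod.swap]) (auto simp: DD_alt add.commute)
qed

lemma ps_mult_assoc: "ps_mult (ps_mult f g) h = ps_mult f (ps_mult g (h :: ('n::finite) ps))"
proof
  fix m :: "'n mon"
  have L: "ps_mult (ps_mult f g) h m = (\<Sum>(p,q)\<in>Sigma (DD m) (\<lambda>p. DD (fst p)). f (fst q) * g (snd q) * h (snd p))"
    unfolding ps_mult_DD
    by (subst sum.Sigma[symmetric]) (auto simp: finite_DD case_prod_beta sum_distrib_right intro!: sum.cong)
  have R: "ps_mult f (ps_mult g h) m = (\<Sum>(p,q)\<in>Sigma (DD m) (\<lambda>p. DD (snd p)). f (fst p) * g (fst q) * h (snd q))"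
    unfolding ps_mult_DD
    by (subst sum.Sigma[symmetric]) (auto simp: finite_DD case_prod_beta sum_distrib_left mult.assoc intro!: sum.cong)
  show "ps_mult (ps_mult f g) h m = ps_mult f (ps_mult g h) m"
    unfolding L R
    by (rule sum.reindex_bij_witness[of _ "\<lambda>(p,q). ((fst p + fst q, snd q), (fst p, fst q))"
                                          "\<lambda>(p,q). ((fst q, snd q + snd p), (snd q, snd p))"])
       (auto simp: DD_alt add.assoc)
qed

definition mono :: "'n mon \<Rightarrow> 'n ps" where
  "mono a = (\<lambda>m. if m = a then 1 else 0)"

lemma ps_mult_mono: "ps_mult (mono a) f (m :: ('n::finite) mon) = (if a \<le> m then f (m - a) else 0)"
proof -
  have "ps_mult (mono a) f m = (\<Sum>b\<in>{b. b \<le> m}. if a = b then f (m - b) else 0)"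
    unfolding ps_mult_alt by (rule sum.cong) (auto simp: mono_def)
  then show ?thesis by (simp add: finite_le_mon)
qed

lemma ps_const_mono: "ps_const c = (\<lambda>m. c * mono 0 m)"
  by (auto simp: ps_const_def mono_def zero_fun_def fun_eq_iff)

lemma ps_mult_const: "ps_mult (ps_const c) f = (\<lambda>m. c * f m)" for f :: "('n::finite) ps"
proof
  fix m :: "'n mon"
  have "ps_mult (ps_const c) f m = (\<Sum>a\<in>{a. a \<le> m}. c * (mono 0 a * f (m - a)))"
    by (simp add: ps_mult_alt ps_const_mono mult.assoc)
  also have "\<dots> = c * ps_mult (mono 0) f m" by (simp add: ps_mult_alt sum_distrib_left)
  also have "\<dots> = c * f m" by (simp add: ps_mult_mono)
  finally show "ps_mult (ps_const c) f m = c * f m" .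
qed

lemma ps_mult_add: "ps_mult f (ps_add g h) = ps_add (ps_mult f g) (ps_mult f (h :: ('n::finite) ps))"
  by (auto simp: ps_mult_alt ps_add_def fun_eq_iff distrib_left sum.distrib)

typedef (overloaded) ('n::finite) A = "UNIV :: 'n ps set" by auto

setup_lifting type_definition_A

instantiation A :: (finite) comm_ring_1
begin
lift_definition zero_A :: "'a A" is "\<lambda>m. 0" .
lift_definition one_A :: "'a A" is "ps_const 1" .
lift_definition plus_A :: "'a A \<Rightarrow> 'a A \<Rightarrow> 'a A" is ps_add .
lift_definition minus_A :: "'a A \<Rightarrow> 'a A \<Rightarrow> 'a A" is ps_diff .
lift_definition uminus_A :: "'a A \<Rightarrow> 'a A" is "\<lambda>f m. - f m" .
lift_definition times_A :: "'a A \<Rightarrow> 'a A \<Rightarrow> 'a A" is ps_mult .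
instance
proof
  fix a b c :: "'a A"
  show "a * b * c = a * (b * c)" by transfer (rule ps_mult_assoc)
  show "a * b = b * a" by transfer (rule ps_mult_comm)
  show "1 * a = a" by transfer (simp add: ps_mult_const)
  show "(a + b) * c = a * c + b * c" by transfer (metis ps_mult_add ps_mult_comm)
  show "a + b + c = a + (b + c)" by transfer (simp add: ps_add_def add.assoc)
  show "a + b = b + a" by transfer (simp add: ps_add_def add.commute)
  show "0 + a = a" by transfer (simp add: ps_add_def)
  show "- a + a = 0" by transfer (simp add: ps_add_def)
  show "a - b = a + - b" by transfer (simp add: ps_add_def ps_diff_def)
  show "(0::'a A) \<noteq> 1" by transfer (auto simp: ps_const_def fun_eq_iff)
qed
end

definition coef :: "('n::finite) A \<Rightarrow> 'n mon \<Rightarrow> complex" where "coef = Rep_A"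

lemma A_eqI: "(\<And>m. coef f m = coef g m) \<Longrightarrow> f = g"
  by (metis Rep_A_inject coef_def ext)

lemma coef_add[simp]: "coef (f + g) m = coef f m + coef g m"
  by (simp add: coef_def plus_A.rep_eq ps_add_def)
lemma coef_diff[simp]: "coef (f - g) m = coef f m - coef g m"
  by (simp add: coef_def minus_A.rep_eq ps_diff_def)
lemma coef_uminus[simp]: "coef (- f) m = - coef f m"
  by (simp add: coef_def uminus_A.rep_eq)
lemma coef_zero[simp]: "coef 0 m = 0"
  by (simp add: coef_def zero_A.rep_eq)
lemma coef_sum[simp]: "coef (sum F S) m = (\<Sum>i\<in>S. coef (F i) m)"
  by (induction S rule: infinite_finite_induct) auto
lemma coef_mult: "coef (f * g) m = (\<Sum>a\<in>{a. a \<le> m}. coef f a * coef g (m - a))"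
  by (simp add: coef_def times_A.rep_eq ps_mult_alt)
lemma coef_mult_DD: "coef (f * g) m = (\<Sum>(a,b)\<in>DD m. coef f a * coef g b)"
  by (simp add: coef_def times_A.rep_eq ps_mult_DD)

lift_definition cst :: "complex \<Rightarrow> ('n::finite) A" is ps_const .
lift_definition mo :: "('n::finite) mon \<Rightarrow> 'n A" is mono .

lemma coef_cst_mult[simp]: "coef (cst c * f) m = c * coef f m"
  by (simp add: coef_def times_A.rep_eq cst.rep_eq ps_mult_const)
lemma coef_mo_mult: "coef (mo a * f) m = (if a \<le> m then coef f (m - a) else 0)"
  by (simp add: coef_def times_A.rep_eq mo.rep_eq ps_mult_mono)
lemma coef_mo: "coef (mo a) m = (if m = a then 1 else 0)"
  by (simp add: coef_def mo.rep_eq mono_def)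
lemma coef_cst: "coef (cst c) m = (if m = 0 then c else 0)"
  by (simp add: coef_def cst.rep_eq ps_const_def zero_fun_def)
lemma coef_one: "coef 1 m = (if m = 0 then 1 else 0)"
  by (simp add: coef_def one_A.rep_eq ps_const_def zero_fun_def)

lemma cst_add: "cst (a + b) = cst a + cst b"
  by (rule A_eqI) (simp add: coef_cst)
lemma cst_mult: "cst (a * b) = cst a * cst b"
  by (rule A_eqI) (simp add: coef_cst)
lemma cst_1[simp]: "cst 1 = 1"
  by (rule A_eqI) (simp add: coef_cst coef_one)
lemma cst_0[simp]: "cst 0 = 0"
  by (rule A_eqI) (simp add: coef_cst)

lemma mon_eq_add: "((m::'n mon) = a + b) = (a \<le> m \<and> m - a = b)"
proof -
  have "(\<forall>x. m x = a x + b x) = ((\<forall>x. a x \<le> m x) \<and> (\<forall>x. m x - a x = b x))"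
    by (metis add_diff_cancel_left' le_add1 le_add_diff_inverse)
  then show ?thesis by (simp add: le_fun_def fun_eq_iff)
qed

lemma mo_mult: "mo a * mo b = mo (a + b)"
proof (rule A_eqI)
  fix m
  show "coef (mo a * mo b) m = coef (mo (a + b)) m"
    by (auto simp: coef_mo_mult coef_mo mon_eq_add)
qed



lift_definition dv :: "'n var \<Rightarrow> ('n::finite) A \<Rightarrow> 'n A" is ps_deriv .
lift_definition ev :: "'n var \<Rightarrow> ('n::finite) A \<Rightarrow> 'n A" is "\<lambda>v f m. of_nat (m v) * f m" .

definition ee :: "'n var \<Rightarrow> 'n mon" where "ee v = (\<lambda>w. if w = v then 1 else 0)"

definition xv :: "'n var \<Rightarrow> ('n::finite) A" where "xv v = mo (ee v)"

lemma coef_dv: "coef (dv v f) m = of_nat (Suc (m v)) * coef f (m(v := Suc (m v)))"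
  by (simp add: coef_def dv.rep_eq ps_deriv_def)
lemma coef_ev: "coef (ev v f) m = of_nat (m v) * coef f m"
  by (simp add: coef_def ev.rep_eq)

lemma dv_add[simp]: "dv v (f + g) = dv v f + dv v g"
  by (rule A_eqI) (simp add: coef_dv algebra_simps)
lemma dv_diff[simp]: "dv v (f - g) = dv v f - dv v g"
  by (rule A_eqI) (simp add: coef_dv algebra_simps)
lemma dv_uminus[simp]: "dv v (- f) = - dv v f"
  by (rule A_eqI) (simp add: coef_dv algebra_simps)
lemma dv_zero[simp]: "dv v 0 = 0"
  by (rule A_eqI) (simp add: coef_dv)
lemma dv_sum[simp]: "dv v (sum F S) = (\<Sum>i\<in>S. dv v (F i))"
  by (rule A_eqI) (simp add: coef_dv sum_distrib_left)
lemma upd_ne0: "(m::'n mon)(v := Suc k) \<noteq> 0"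
proof
  assume "m(v := Suc k) = 0"
  then have "(m(v := Suc k)) v = (0::'n mon) v" by simp
  then show False by simp
qed

lemma dv_cst[simp]: "dv v (cst c) = 0"
  by (rule A_eqI) (simp add: coef_dv coef_cst upd_ne0)
lemma dv_one[simp]: "dv v 1 = 0"
  using dv_cst[of v 1] by simp

lemma ev_add: "ev v (f + g) = ev v f + ev v g"
  by (rule A_eqI) (simp add: coef_ev algebra_simps)

lemma DD_mv: "(a,b) \<in> DD m \<Longrightarrow> m v = a v + b v"
  by (simp add: DD_def)

lemma ev_mult: "ev v (f * g) = ev v f * g + f * ev v g"
proof (rule A_eqI)
  fix m
  have "coef (ev v (f * g)) m = (\<Sum>(a,b)\<in>DD m. of_nat (m v) * (coef f a * coef g b))"
    by (simp add: coef_ev coef_mult_DD sum_distrib_left case_prod_beta)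
  also have "\<dots> = (\<Sum>(a,b)\<in>DD m. of_nat (a v) * coef f a * coef g b + coef f a * (of_nat (b v) * coef g b))"
    by (rule sum.cong) (auto dest!: DD_mv[of _ _ _ v] simp: algebra_simps)
  also have "\<dots> = coef (ev v f * g + f * ev v g) m"
    by (simp add: coef_mult_DD coef_ev sum.distrib case_prod_beta)
  finally show "coef (ev v (f * g)) m = coef (ev v f * g + f * ev v g) m" .
qed

lemma ee_le: "(ee v \<le> m) = (m v \<ge> 1)"
  by (auto simp: ee_def le_fun_def)

lemma xv_dv: "xv v * dv v f = ev v f"
proof (rule A_eqI)
  fix m
  show "coef (xv v * dv v f) m = coef (ev v f) m"
  proof (cases "m v \<ge> 1")
    case True
    then have "(m - ee v)(v := Suc ((m - ee v) v)) = m"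
      by (auto simp: ee_def fun_eq_iff)
    moreover have "Suc ((m - ee v) v) = m v" using True by (simp add: ee_def)
    ultimately show ?thesis using True
      by (simp add: xv_def coef_mo_mult ee_le coef_dv coef_ev)
  next
    case False
    then show ?thesis by (simp add: xv_def coef_mo_mult ee_le coef_ev)
  qed
qed

lemma xv_cancel: "xv v * h = 0 \<Longrightarrow> h = 0"
proof (rule A_eqI)
  fix m assume h: "xv v * h = 0"
  have "ee v \<le> m + ee v" by (simp add: le_fun_def)
  then have "coef (xv v * h) (m + ee v) = coef h m"
    by (simp add: xv_def coef_mo_mult)
  then show "coef h m = coef 0 m" using h by simp
qed

lemma dv_mult: "dv v (f * g) = dv v f * g + f * dv v g"
proof -
  have "xv v * (dv v (f * g) - (dv v f * g + f * dv v g)) = 0"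
    by (simp add: right_diff_distrib distrib_left xv_dv ev_mult flip: mult.assoc)
       (simp add: mult.commute mult.left_commute xv_dv)
  then show ?thesis using xv_cancel by fastforce
qed

lemma dv_cst_mult[simp]: "dv v (cst c * f) = cst c * dv v f"
  by (simp add: dv_mult)

lemma dv_commute: "dv v (dv w f) = dv w (dv v f)"
proof (rule A_eqI)
  fix m
  show "coef (dv v (dv w f)) m = coef (dv w (dv v f)) m"
  proof (cases "v = w")
    case True then show ?thesis by simp
  next
    case False
    then show ?thesis by (simp add: coef_dv fun_upd_twist)
  qed
qed

lemma dv_xv: "dv v (xv w) = (if v = w then 1 else 0)"
proof (rule A_eqI)
  fix m
  have "(m(v := Suc (m v)) = ee w) = (v = w \<and> m = 0)"
    by (auto simp: ee_def fun_eq_iff split: if_splits) 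
  then show "coef (dv v (xv w)) m = coef (if v = w then 1 else 0) m"
    by (auto simp: coef_dv xv_def coef_mo coef_one)
qed



definition pb :: "('n::finite) A \<Rightarrow> 'n A \<Rightarrow> 'n A" where
  "pb f g = (\<Sum>i\<in>UNIV. dv (Qv i) f * dv (Pv i) g - dv (Pv i) f * dv (Qv i) g)"

lemma pb_add_left: "pb (f + g) h = pb f h + pb g h"
  unfolding pb_def sum.distrib[symmetric] by (intro sum.cong refl) (simp add: algebra_simps)
lemma pb_add_right: "pb h (f + g) = pb h f + pb h g"
  unfolding pb_def sum.distrib[symmetric] by (intro sum.cong refl) (simp add: algebra_simps)
lemma pb_diff_left: "pb (f - g) h = pb f h - pb g h"
  unfolding pb_def sum_subtractf[symmetric] by (intro sum.cong refl) (simp add: algebra_simps)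
lemma pb_diff_right: "pb h (f - g) = pb h f - pb h g"
  unfolding pb_def sum_subtractf[symmetric] by (intro sum.cong refl) (simp add: algebra_simps)
lemma pb_uminus_left: "pb (- f) h = - pb f h"
  unfolding pb_def sum_negf[symmetric] by (intro sum.cong refl) (simp add: algebra_simps)
lemma pb_uminus_right: "pb h (- f) = - pb h f"
  unfolding pb_def sum_negf[symmetric] by (intro sum.cong refl) (simp add: algebra_simps)
lemma pb_zero_left[simp]: "pb 0 h = 0" by (simp add: pb_def)
lemma pb_zero_right[simp]: "pb h 0 = 0" by (simp add: pb_def)
lemma pb_sum_left: "pb (sum F S) h = (\<Sum>k\<in>S. pb (F k) h)"
  by (induction S rule: infinite_finite_induct) (auto simp: pb_add_left)
lemma pb_sum_right: "pb h (sum F S) = (\<Sum>k\<in>S. pb h (F k))"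
  by (induction S rule: infinite_finite_induct) (auto simp: pb_add_right)
lemma pb_cst_left: "pb (cst c * f) h = cst c * pb f h"
  unfolding pb_def dv_cst_mult sum_distrib_left by (intro sum.cong refl) (simp add: algebra_simps)
lemma pb_cst_right: "pb h (cst c * f) = cst c * pb h f"
  unfolding pb_def dv_cst_mult sum_distrib_left by (intro sum.cong refl) (simp add: algebra_simps)
lemma pb_antisym: "pb f g = - pb g f"
  unfolding pb_def sum_negf[symmetric] by (intro sum.cong refl) (simp add: algebra_simps)
lemma pb_mult_right: "pb f (g * h) = pb f g * h + g * pb f h"
proof -
  have "pb f (g*h) = (\<Sum>i\<in>UNIV. (dv (Qv i) f * dv (Pv i) g - dv (Pv i) f * dv (Qv i) g) * h
        + g * (dv (Qv i) f * dv (Pv i) h - dv (Pv i) f * dv (Qv i) h))"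
    unfolding pb_def dv_mult by (intro sum.cong refl) (simp add: algebra_simps)
  also have "\<dots> = pb f g * h + g * pb f h"
    by (simp add: pb_def sum.distrib sum_distrib_left sum_distrib_right)
  finally show ?thesis .
qed
lemma pb_mult_left: "pb (g * h) f = pb g f * h + g * pb h f"
proof -
  have "pb (g*h) f = - pb f (g*h)" by (rule pb_antisym)
  also have "\<dots> = - (pb f g * h + g * pb f h)" by (simp add: pb_mult_right)
  also have "\<dots> = pb g f * h + g * pb h f" by (simp add: pb_antisym[of g f] pb_antisym[of h f])
  finally show ?thesis .
qed

definition J :: "('n::finite) A \<Rightarrow> 'n A \<Rightarrow> 'n A \<Rightarrow> 'n \<Rightarrow> 'n \<Rightarrow> 'n A" where
  "J f g h i j = dv (Qv i) f * (dv (Pv i) (dv (Qv j) g) * dv (Pv j) h + dv (Qv j) g * dv (Pv i) (dv (Pv j) h)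
       - (dv (Pv i) (dv (Pv j) g) * dv (Qv j) h + dv (Pv j) g * dv (Pv i) (dv (Qv j) h)))
     - dv (Pv i) f * (dv (Qv i) (dv (Qv j) g) * dv (Pv j) h + dv (Qv j) g * dv (Qv i) (dv (Pv j) h)
       - (dv (Qv i) (dv (Pv j) g) * dv (Qv j) h + dv (Pv j) g * dv (Qv i) (dv (Qv j) h)))"

lemma pb_pb: "pb f (pb g h) = (\<Sum>i\<in>UNIV. \<Sum>j\<in>UNIV. J f g h i j)"
proof -
  have dP: "dv v (pb g h) = (\<Sum>j\<in>UNIV. dv v (dv (Qv j) g) * dv (Pv j) h + dv (Qv j) g * dv v (dv (Pv j) h)
       - (dv v (dv (Pv j) g) * dv (Qv j) h + dv (Pv j) g * dv v (dv (Qv j) h)))" for v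
    unfolding pb_def dv_sum dv_diff dv_mult ..
  show ?thesis
    unfolding pb_def[of f] dP sum_distrib_left sum_subtractf[symmetric] J_def ..
qed

lemma A_double_zero: "(x :: ('n::finite) A) + x = 0 \<Longrightarrow> x = 0"
proof (rule A_eqI)
  fix m assume "x + x = 0"
  then have "coef x m + coef x m = 0" by (metis coef_add coef_zero)
  then show "coef x m = coef 0 m" by simp
qed

lemma sum_antisym_zero:
  assumes "\<And>i j. S i j + S j i = 0"
  shows "(\<Sum>i\<in>UNIV. \<Sum>j\<in>UNIV. S i j) = (0 :: ('n::finite) A)"
proof -
  have "(\<Sum>i\<in>UNIV. \<Sum>j\<in>UNIV. S i j) + (\<Sum>i\<in>UNIV. \<Sum>j\<in>UNIV. S i j)
     = (\<Sum>i\<in>UNIV. \<Sum>j\<in>UNIV. S i j) + (\<Sum>i\<in>UNIV. \<Sum>j\<in>UNIV. S j i)"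
    by (subst (3) sum.swap) rule
  also have "\<dots> = (\<Sum>i\<in>UNIV. \<Sum>j\<in>UNIV. S i j + S j i)"
    by (simp add: sum.distrib)
  also have "\<dots> = 0" by (simp add: assms)
  finally show ?thesis by (rule A_double_zero)
qed

lemma J_sym: "(J f g h i j + J h f g i j - J g f h i j) + (J f g h j i + J h f g j i - J g f h j i) = 0"
  unfolding J_def by (simp add: dv_commute algebra_simps)

lemma jacobi: "pb f (pb g h) = pb (pb f g) h + pb g (pb f h)"
proof -
  have "pb f (pb g h) + pb h (pb f g) - pb g (pb f h) = 0"
    unfolding pb_pb sum_subtractf[symmetric] sum.distrib[symmetric]
    by (rule sum_antisym_zero) (rule J_sym)
  moreover have "pb (pb f g) h = - pb h (pb f g)" by (rule pb_antisym)
  ultimately show ?thesis by (simp add: algebra_simps)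
qed



definition wt :: "'n var \<Rightarrow> nat" where "wt v = (case v of Lam _ \<Rightarrow> 2 | _ \<Rightarrow> 1)"

definition deg :: "('n::finite) mon \<Rightarrow> nat" where "deg m = (\<Sum>v\<in>UNIV. wt v * m v)"

lemma wt_ge1: "wt v \<ge> 1" by (cases v) (auto simp: wt_def)

lemma deg_add: "deg (a + b) = deg a + deg b"
  by (simp add: deg_def algebra_simps sum.distrib)
lemma deg_zero[simp]: "deg 0 = 0"
  by (simp add: deg_def)
lemma deg_upd: "deg (m(v := Suc (m v))) = deg m + wt v"
proof -
  have "m(v := Suc (m v)) = m + ee v" by (auto simp: ee_def fun_eq_iff)
  moreover have "deg (ee v) = wt v"
  proof -
    have "deg (ee v) = (\<Sum>va\<in>UNIV. if va = v then wt va else 0)"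
      unfolding deg_def ee_def by (rule sum.cong) auto
    then show ?thesis by simp
  qed
  ultimately show ?thesis by (simp add: deg_add)
qed
lemma deg_le: "a \<le> m \<Longrightarrow> deg a \<le> deg m"
  unfolding deg_def by (intro sum_mono) (simp add: le_fun_def)
lemma deg_minus: "a \<le> m \<Longrightarrow> deg (m - a) = deg m - deg a"
  by (metis deg_add mon_add_diff add_diff_cancel_left')
lemma comp_le_deg: "m v \<le> deg m"
proof -
  have "m v \<le> wt v * m v" using wt_ge1[of v] by simp
  also have "\<dots> \<le> deg m" unfolding deg_def by (rule member_le_sum) auto
  finally show ?thesis .
qed
lemma finite_deg_le: "finite {m :: ('n::finite) mon. deg m \<le> d}"
proof (rule finite_subset[OF _ finite_le_mon[of "\<lambda>_. d"]])
  show "{m :: 'n mon. deg m \<le> d} \<subseteq> {a. a \<le> (\<lambda>_. d)}"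
  proof (rule subsetI, simp add: le_fun_def, intro allI)
    fix m :: "'n mon" and v assume "deg m \<le> d"
    then show "m v \<le> d" using comp_le_deg[of m v] by simp
  qed
qed
lemma finite_deg_eq: "finite {m :: ('n::finite) mon. deg m = d}"
  by (rule finite_subset[OF _ finite_deg_le[of d]]) auto

lemma mon_deg_eq: "mon_deg m = deg m"
proof -
  have U: "(UNIV :: 'n var set) = range Lam \<union> range Qv \<union> range Pv"
    by (auto, case_tac x, auto)
  have "deg m = (\<Sum>v\<in>range Lam. wt v * m v) + (\<Sum>v\<in>range Qv. wt v * m v) + (\<Sum>v\<in>range Pv. wt v * m v)"
    unfolding deg_def U
    by (subst sum.union_disjoint, auto)+
  also have "\<dots> = (\<Sum>i\<in>UNIV. 2 * m (Lam i)) + (\<Sum>i\<in>UNIV. m (Qv i)) + (\<Sum>i\<in>UNIV. m (Pv i))"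
    by (simp add: sum.reindex inj_on_def wt_def)
  also have "\<dots> = mon_deg m" by (simp add: mon_deg_def sum.distrib)
  finally show ?thesis by simp
qed

section \<open>Orders\<close>

definition ordge :: "nat \<Rightarrow> ('n::finite) A \<Rightarrow> bool" where
  "ordge r f \<longleftrightarrow> (\<forall>m. deg m < r \<longrightarrow> coef f m = 0)"

lemma ordgeD: "ordge r f \<Longrightarrow> deg m < r \<Longrightarrow> coef f m = 0" by (simp add: ordge_def)
lemma ordge_0[simp]: "ordge 0 f" by (simp add: ordge_def)
lemma ordge_zero[simp]: "ordge r 0" by (simp add: ordge_def)
lemma ordge_mono: "ordge r f \<Longrightarrow> r' \<le> r \<Longrightarrow> ordge r' f" by (simp add: ordge_def)
lemma ordge_add: "ordge r f \<Longrightarrow> ordge r g \<Longrightarrow> ordge r (f + g)" by (simp add: ordge_def)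
lemma ordge_diff: "ordge r f \<Longrightarrow> ordge r g \<Longrightarrow> ordge r (f - g)" by (simp add: ordge_def)
lemma ordge_uminus: "ordge r f \<Longrightarrow> ordge r (- f)" by (simp add: ordge_def)
lemma ordge_uminus_iff[simp]: "ordge r (- f) = ordge r f" by (simp add: ordge_def)
lemma ordge_sum: "(\<And>i. i \<in> S \<Longrightarrow> ordge r (F i)) \<Longrightarrow> ordge r (sum F S)" by (simp add: ordge_def)
lemma ordge_cst_mult: "ordge r f \<Longrightarrow> ordge r (cst c * f)" by (simp add: ordge_def)

lemma ordge_mult: fixes f g :: "('n::finite) A" shows "ordge r f \<Longrightarrow> ordge s g \<Longrightarrow> ordge (r + s) (f * g)"
  unfolding ordge_def
proof (intro allI impI)
  fix m :: "'n mon" assume f: "\<forall>m. deg m < r \<longrightarrow> coef f m = 0" and g: "\<forall>m. deg m < s \<longrightarrow> coef g m = 0"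
    and m: "deg m < r + s"
  have z: "coef f a * coef g b = 0" if "(a,b) \<in> DD m" for a b :: "'n mon"
  proof -
    from that have "m = a + b" by (auto simp: DD_alt)
    then have "deg a < r \<or> deg b < s" using m by (simp add: deg_add) linarith
    then show ?thesis using f g by auto
  qed
  show "coef (f * g) m = 0" unfolding coef_mult_DD by (rule sum.neutral) (use z in auto)
qed

lemma ordge_dv: fixes f :: "('n::finite) A" shows "ordge r f \<Longrightarrow> ordge (r - wt v) (dv v f)"
  unfolding ordge_def
proof (intro allI impI)
  fix m :: "'n mon" assume f: "\<forall>m. deg m < r \<longrightarrow> coef f m = 0" and "deg m < r - wt v"
  then have "deg (m(v := Suc (m v))) < r" by (simp add: deg_upd)
  then show "coef (dv v f) m = 0" using f by (simp add: coef_dv)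
qed

lemma wt_QP[simp]: "wt (Qv i) = 1" "wt (Pv i) = 1" by (simp_all add: wt_def)

lemma ordge_pb: "ordge r f \<Longrightarrow> ordge s g \<Longrightarrow> ordge (r + s - 2) (pb f g)"
  unfolding pb_def
  by (intro ordge_sum ordge_diff; rule ordge_mono[OF ordge_mult[OF ordge_dv ordge_dv]]) auto

section \<open>Homogeneous parts\<close>

definition hom :: "nat \<Rightarrow> ('n::finite) A \<Rightarrow> bool" where
  "hom d f \<longleftrightarrow> (\<forall>m. deg m \<noteq> d \<longrightarrow> coef f m = 0)"

lemma hom_zero[simp]: "hom d 0" by (simp add: hom_def)
lemma hom_add: "hom d f \<Longrightarrow> hom d g \<Longrightarrow> hom d (f + g)" by (auto simp: hom_def)
lemma hom_diff: "hom d f \<Longrightarrow> hom d g \<Longrightarrow> hom d (f - g)" by (auto simp: hom_def)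
lemma hom_uminus: "hom d f \<Longrightarrow> hom d (- f)" by (auto simp: hom_def)
lemma hom_sum: "(\<And>i. i \<in> S \<Longrightarrow> hom d (F i)) \<Longrightarrow> hom d (sum F S)"
  by (induction S rule: infinite_finite_induct) (auto intro: hom_add)
lemma hom_cst_mult: "hom d f \<Longrightarrow> hom d (cst c * f)" by (auto simp: hom_def)
lemma hom_ordge: "hom d f \<Longrightarrow> ordge d f" by (auto simp: hom_def ordge_def)
lemma hom_mo: "hom (deg a) (mo a)" by (auto simp: hom_def coef_mo)
lemma hom_mult: fixes f g :: "('n::finite) A" shows "hom d f \<Longrightarrow> hom e g \<Longrightarrow> hom (d + e) (f * g)"
  unfolding hom_def
proof (intro allI impI)
  fix m :: "'n mon" assume f: "\<forall>m. deg m \<noteq> d \<longrightarrow> coef f m = 0" and g: "\<forall>m. deg m \<noteq> e \<longrightarrow> coef g m = 0"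
    and m: "deg m \<noteq> d + e"
  have z: "coef f a * coef g b = 0" if "(a,b) \<in> DD m" for a b :: "'n mon"
  proof -
    from that have "m = a + b" by (auto simp: DD_alt)
    then have "deg a \<noteq> d \<or> deg b \<noteq> e" using m by (auto simp: deg_add)
    then show ?thesis using f g by auto
  qed
  show "coef (f * g) m = 0" unfolding coef_mult_DD by (rule sum.neutral) (use z in auto)
qed

lift_definition part :: "nat \<Rightarrow> ('n::finite) A \<Rightarrow> 'n A" is "\<lambda>d f m. if deg m = d then f m else 0" .

lemma coef_part: "coef (part d f) m = (if deg m = d then coef f m else 0)"
  by (simp add: coef_def part.rep_eq)
lemma hom_part: "hom d (part d f)" by (simp add: hom_def coef_part)
lemma part_add: "part d (f + g) = part d f + part d g" by (rule A_eqI) (simp add: coef_part)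
lemma part_diff: "part d (f - g) = part d f - part d g" by (rule A_eqI) (simp add: coef_part)
lemma part_hom: "hom d f \<Longrightarrow> part d f = f" by (rule A_eqI) (auto simp: coef_part hom_def)
lemma part_hom_other: "hom e f \<Longrightarrow> e \<noteq> d \<Longrightarrow> part d f = 0" by (rule A_eqI) (auto simp: coef_part hom_def)
lemma part_ordge: "ordge r f \<Longrightarrow> d < r \<Longrightarrow> part d f = 0" by (rule A_eqI) (auto simp: coef_part ordge_def)

section \<open>Infinite sums\<close>

lift_definition isum :: "(nat \<Rightarrow> ('n::finite) A) \<Rightarrow> 'n A" is
  "\<lambda>F m. \<Sum>k | F k m \<noteq> 0. F k m" .

lemma coef_isum: "coef (isum F) m = (\<Sum>k | coef (F k) m \<noteq> 0. coef (F k) m)"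
  by (simp add: coef_def isum.rep_eq)

lemma coef_isum_le: "(\<And>k. k > N \<Longrightarrow> coef (F k) m = 0) \<Longrightarrow> coef (isum F) m = (\<Sum>k\<le>N. coef (F k) m)"
  unfolding coef_isum
  by (rule sum.mono_neutral_left) (auto simp: not_le[symmetric])

definition cvg :: "(nat \<Rightarrow> ('n::finite) A) \<Rightarrow> bool" where
  "cvg F \<longleftrightarrow> (\<forall>r. \<exists>K. \<forall>k>K. ordge r (F k))"

lemma cvgD: "cvg F \<Longrightarrow> \<exists>K. \<forall>k>K. ordge r (F k)" by (simp add: cvg_def)

lemma cvgI_shift: "(\<And>k. ordge (k - c) (F k)) \<Longrightarrow> cvg F"
  unfolding cvg_def
proof
  fix r assume a: "\<And>k. ordge (k - c) (F k)"
  have "\<forall>k>r + c. ordge r (F k)"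
  proof (intro allI impI)
    fix k assume "k > r + c"
    then show "ordge r (F k)" using a[of k] by (rule_tac ordge_mono) auto
  qed
  then show "\<exists>K. \<forall>k>K. ordge r (F k)" by blast
qed

lemma cvg_add: "cvg F \<Longrightarrow> cvg G \<Longrightarrow> cvg (\<lambda>k. F k + G k)"
  unfolding cvg_def by (metis ordge_add max.strict_boundedE less_max_iff_disj)

lemma cvg_sum: "(\<And>i. i \<in> S \<Longrightarrow> cvg (F i)) \<Longrightarrow> cvg (\<lambda>k. \<Sum>i\<in>S. F i k)"
proof (induction S rule: infinite_finite_induct)
  case (infinite A) then show ?case by (simp add: cvg_def)
next
  case empty then show ?case by (simp add: cvg_def)
next
  case (insert x F) then show ?case by (simp add: cvg_add)
qed

lemma isum_add: fixes F G :: "nat \<Rightarrow> ('n::finite) A" shows "cvg F \<Longrightarrow> cvg G \<Longrightarrow> isum (\<lambda>k. F k + G k) = isum F + isum G"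
proof (rule A_eqI)
  fix m :: "'n mon" assume F: "cvg F" and G: "cvg G"
  obtain K1 where K1: "\<forall>k>K1. ordge (Suc (deg m)) (F k)" using cvgD[OF F] by blast
  obtain K2 where K2: "\<forall>k>K2. ordge (Suc (deg m)) (G k)" using cvgD[OF G] by blast
  let ?N = "max K1 K2"
  have zF: "coef (F k) m = 0" if "k > ?N" for k using K1 that by (auto intro: ordgeD)
  have zG: "coef (G k) m = 0" if "k > ?N" for k using K2 that by (auto intro: ordgeD)
  have "coef (isum (\<lambda>k. F k + G k)) m = (\<Sum>k\<le>?N. coef (F k + G k) m)"
    by (rule coef_isum_le) (simp add: zF zG)
  also have "\<dots> = (\<Sum>k\<le>?N. coef (F k) m) + (\<Sum>k\<le>?N. coef (G k) m)" by (simp add: sum.distrib)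
  also have "\<dots> = coef (isum F + isum G) m"
    using coef_isum_le[of ?N F m, OF zF] coef_isum_le[of ?N G m, OF zG] by simp
  finally show "coef (isum (\<lambda>k. F k + G k)) m = coef (isum F + isum G) m" .
qed

lemma ordge_isum: "(\<And>k. ordge r (F k)) \<Longrightarrow> ordge r (isum F)"
  unfolding ordge_def coef_isum by simp

lemma isum_finite: "(\<And>k. k > N \<Longrightarrow> F k = 0) \<Longrightarrow> isum F = (\<Sum>k\<le>N. F k)"
  by (rule A_eqI) (simp add: coef_isum_le[of N])

lemma isum_zero[simp]: "isum (\<lambda>k. 0) = 0"
  by (rule A_eqI) (simp add: coef_isum)

lemma isum_sum: "(\<And>i. i \<in> S \<Longrightarrow> cvg (F i)) \<Longrightarrow> isum (\<lambda>k. \<Sum>i\<in>S. F i k) = (\<Sum>i\<in>S. isum (F i))"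
proof (induction S rule: infinite_finite_induct)
  case (insert x S)
  then show ?case by (simp add: isum_add cvg_sum)
qed auto

lemma isum_split:
  assumes "cvg F"
  shows "isum F = (\<Sum>k\<le>N. F k) + isum (\<lambda>k. if k \<le> N then 0 else F k)"
proof -
  have c1: "cvg (\<lambda>k. if k \<le> N then F k else 0)"
    unfolding cvg_def by (metis leD ordge_zero)
  have c2: "cvg (\<lambda>k. if k \<le> N then 0 else F k)"
    using cvgD[OF assms] unfolding cvg_def by (metis ordge_zero)
  have "isum F = isum (\<lambda>k. (if k \<le> N then F k else 0) + (if k \<le> N then 0 else F k))"
    by (intro arg_cong[where f=isum] ext) simp
  also have "\<dots> = isum (\<lambda>k. if k \<le> N then F k else 0) + isum (\<lambda>k. if k \<le> N then 0 else F k)"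
    by (rule isum_add[OF c1 c2])
  also have "isum (\<lambda>k. if k \<le> N then F k else 0) = (\<Sum>k\<le>N. F k)"
    by (subst isum_finite[of N]) auto
  finally show ?thesis .
qed

definition additive :: "(('n::finite) A \<Rightarrow> 'n A) \<Rightarrow> bool" where
  "additive L \<longleftrightarrow> (\<forall>x y. L (x + y) = L x + L y)"

definition bnd :: "nat \<Rightarrow> (('n::finite) A \<Rightarrow> 'n A) \<Rightarrow> bool" where
  "bnd c L \<longleftrightarrow> (\<forall>r X. ordge r X \<longrightarrow> ordge (r - c) (L X))"

lemma additive_zero: "additive L \<Longrightarrow> L 0 = 0"
  unfolding additive_def by (metis add_cancel_right_right add_0)

lemma additive_sum: "additive L \<Longrightarrow> L (sum F S) = (\<Sum>i\<in>S. L (F i))"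
  by (induction S rule: infinite_finite_induct) (auto simp: additive_zero additive_def)

lemma isum_cont:
  fixes G :: "nat \<Rightarrow> ('n::finite) A"
  assumes L: "additive L" "bnd c L" and G: "cvg G"
  shows "L (isum G) = isum (\<lambda>k. L (G k))"
proof (rule A_eqI)
  fix m
  obtain N where N: "\<forall>k>N. ordge (Suc (deg (m :: 'n mon)) + c) (G k)" using cvgD[OF G] by blast
  have tail: "ordge (Suc (deg m) + c) (isum (\<lambda>k. if k \<le> N then 0 else G k))"
    by (rule ordge_isum) (use N in auto)
  have "L (isum G) = (\<Sum>k\<le>N. L (G k)) + L (isum (\<lambda>k. if k \<le> N then 0 else G k))"
    by (subst isum_split[OF G, of N]) (simp add: L(1)[unfolded additive_def] additive_sum[OF L(1)])
  moreover have "ordge (Suc (deg m)) (L (isum (\<lambda>k. if k \<le> N then 0 else G k)))"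
    using L(2) tail unfolding bnd_def by fastforce
  ultimately have "coef (L (isum G)) m = (\<Sum>k\<le>N. coef (L (G k)) m)"
    by (simp add: ordgeD)
  moreover have "coef (isum (\<lambda>k. L (G k))) m = (\<Sum>k\<le>N. coef (L (G k)) m)"
  proof (rule coef_isum_le)
    fix k assume "k > N"
    then have "ordge (Suc (deg m)) (L (G k))" using N L(2) unfolding bnd_def by fastforce
    then show "coef (L (G k)) m = 0" by (simp add: ordgeD)
  qed
  ultimately show "coef (L (isum G)) m = coef (isum (\<lambda>k. L (G k))) m" by simp
qed

lemma additive_mult: "additive (\<lambda>x. x * g)" by (simp add: additive_def distrib_right)
lemma bnd_mult: "bnd 0 (\<lambda>x. x * g)" unfolding bnd_def using ordge_mult[of _ _ 0 g] by simp
lemma additive_pb: "additive (pb F)" by (simp add: additive_def pb_add_right)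
lemma bnd_pb: "bnd 2 (pb F)" unfolding bnd_def using ordge_pb[of 0 F] by simp

lemma isum_mult: "cvg G \<Longrightarrow> isum G * g = isum (\<lambda>k. G k * g)"
  using isum_cont[OF additive_mult bnd_mult] by blast

lemma cvg_mult: "cvg G \<Longrightarrow> cvg (\<lambda>k. G k * g)"
  unfolding cvg_def using ordge_mult[of _ _ 0 g] by (metis add_0_right ordge_0)

lemma isum_parts: "isum (\<lambda>d. part d f) = f"
proof (rule A_eqI)
  fix m
  show "coef (isum (\<lambda>d. part d f)) m = coef f m"
    by (subst coef_isum_le[of "deg m"]) (auto simp: coef_part)
qed



definition et :: "('n::finite) A \<Rightarrow> 'n A \<Rightarrow> nat \<Rightarrow> 'n A" where
  "et F X k = cst (1 / fact k) * (pb F ^^ k) X"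

definition expo :: "('n::finite) A \<Rightarrow> 'n A \<Rightarrow> 'n A" where
  "expo F X = isum (et F X)"

lemma cst_cst: "cst a * (cst b * Y) = cst (a * b) * Y"
  by (simp add: cst_mult mult.assoc)

lemma ordge_D: "ordge 3 F \<Longrightarrow> ordge r X \<Longrightarrow> ordge (Suc r) (pb F X)"
  using ordge_pb[of 3 F r X] by simp

lemma ordge_Dk: "ordge 3 F \<Longrightarrow> ordge r X \<Longrightarrow> ordge (r + k) ((pb F ^^ k) X)"
  by (induction k) (auto simp: ordge_D)

lemma ordge_et: "ordge 3 F \<Longrightarrow> ordge k (et F X k)"
  unfolding et_def using ordge_Dk[of F 0 X k] by (simp add: ordge_cst_mult)

lemma cvg_et: "ordge 3 F \<Longrightarrow> cvg (et F X)"
  by (rule cvgI_shift[where c=0]) (simp add: ordge_et)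

lemma Dk_add: "(pb F ^^ k) (X + Y) = (pb F ^^ k) X + (pb F ^^ k) Y"
  by (induction k) (auto simp: pb_add_right)
lemma Dk_diff: "(pb F ^^ k) (X - Y) = (pb F ^^ k) X - (pb F ^^ k) Y"
  by (induction k) (auto simp: pb_diff_right)
lemma Dk_cst: "(pb F ^^ k) (cst c * X) = cst c * (pb F ^^ k) X"
  by (induction k) (auto simp: pb_cst_right)
lemma Dk_sum: "(pb F ^^ k) (sum G S) = (\<Sum>i\<in>S. (pb F ^^ k) (G i))"
  by (induction k) (auto simp: pb_sum_right)
lemma Dk_zero[simp]: "(pb F ^^ k) 0 = 0"
  by (induction k) auto

lemma et_add: "et F (X + Y) k = et F X k + et F Y k"
  by (simp add: et_def Dk_add distrib_left)
lemma et_diff: "et F (X - Y) k = et F X k - et F Y k"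
  by (simp add: et_def Dk_diff right_diff_distrib)

lemma expo_add: "ordge 3 F \<Longrightarrow> expo F (X + Y) = expo F X + expo F Y"
  unfolding expo_def et_add by (rule isum_add) (auto intro: cvg_et)

lemma expo_diff: "ordge 3 F \<Longrightarrow> expo F (X - Y) = expo F X - expo F Y"
  by (metis add_diff_cancel diff_add_cancel expo_add)

lemma coef_expo: "ordge 3 F \<Longrightarrow> deg m \<le> N \<Longrightarrow> coef (expo F X) m = (\<Sum>k\<le>N. coef (et F X k) m)"
  unfolding expo_def by (rule coef_isum_le) (auto intro: ordgeD[OF ordge_et])

lemma expo_trunc: assumes "ordge 3 F" shows "ordge (Suc N) (expo F X - (\<Sum>k\<le>N. et F X k))"
  unfolding ordge_def by (auto simp: coef_expo[OF assms, where N=N])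

lemma expo_const: "ordge 3 F \<Longrightarrow> pb F X = 0 \<Longrightarrow> expo F X = X"
proof -
  assume X: "pb F X = 0"
  have "(pb F ^^ Suc k) X = 0" for k by (induction k) (auto simp: X)
  then have "et F X k = 0" if "k > 0" for k using that by (cases k) (auto simp: et_def)
  then have "expo F X = (\<Sum>k\<le>0. et F X k)" unfolding expo_def by (intro isum_finite) auto
  then show ?thesis by (simp add: et_def)
qed

lemma D_et: "pb F (et F X i) = cst (of_nat (Suc i)) * et F X (Suc i)"
proof -
  have "pb F (et F X i) = cst (1 / fact i) * (pb F ^^ Suc i) X" by (simp add: et_def pb_cst_right)
  also have "cst (1 / fact i) = cst (of_nat (Suc i)) * cst (1 / fact (Suc i))"
  proof -
    have "(1 / fact i :: complex) = of_nat (Suc i) * (1 / fact (Suc i))"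
      by (simp only: fact_Suc) (simp add: field_simps del: of_nat_Suc)
    then show ?thesis by (simp add: cst_mult[symmetric] del: of_nat_Suc)
  qed
  finally show ?thesis by (simp add: et_def mult.assoc)
qed

lemma et_Suc: "et F X (Suc i) = cst (1 / of_nat (Suc i)) * pb F (et F X i)"
  by (simp add: D_et cst_cst del: of_nat_Suc)

section \<open>Bilinear maps\<close>

locale bilin =
  fixes B :: "('n::finite) A \<Rightarrow> 'n A \<Rightarrow> 'n A" and c :: nat
  assumes add1: "B (x + y) z = B x z + B y z"
    and add2: "B z (x + y) = B z x + B z y"
    and cst1: "B (cst a * x) y = cst a * B x y"
    and cst2: "B x (cst a * y) = cst a * B x y"
    and ord: "ordge r x \<Longrightarrow> ordge s y \<Longrightarrow> ordge (r + s - c) (B x y)"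
begin

lemma zero1[simp]: "B 0 y = 0" by (metis add1 add_cancel_right_right add_0)
lemma zero2[simp]: "B y 0 = 0" by (metis add2 add_cancel_right_right add_0)
lemma sum1: "B (sum G S) y = (\<Sum>i\<in>S. B (G i) y)"
  by (induction S rule: infinite_finite_induct) (auto simp: add1)
lemma sum2: "B y (sum G S) = (\<Sum>i\<in>S. B y (G i))"
  by (induction S rule: infinite_finite_induct) (auto simp: add2)

lemma Pk_step:
  fixes ex ey :: "nat \<Rightarrow> 'n A"
  shows "(\<Sum>i\<le>n. cst (of_nat (Suc i)) * B (ex (Suc i)) (ey (n - i))
        + cst (of_nat (Suc (n - i))) * B (ex i) (ey (Suc (n - i))))
      = cst (of_nat (Suc n)) * (\<Sum>i\<le>Suc n. B (ex i) (ey (Suc n - i)))"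
proof -
  have s1: "(\<Sum>i\<le>n. cst (of_nat (Suc i)) * B (ex (Suc i)) (ey (n - i)))
      = (\<Sum>i\<le>Suc n. cst (of_nat i) * B (ex i) (ey (Suc n - i)))"
    by (subst sum.atMost_Suc_shift) simp
  have s2: "(\<Sum>i\<le>n. cst (of_nat (Suc (n - i))) * B (ex i) (ey (Suc (n - i))))
      = (\<Sum>i\<le>Suc n. cst (of_nat (Suc n - i)) * B (ex i) (ey (Suc n - i)))"
  proof -
    have "(\<Sum>i\<le>Suc n. cst (of_nat (Suc n - i)) * B (ex i) (ey (Suc n - i)))
        = (\<Sum>i\<le>n. cst (of_nat (Suc n - i)) * B (ex i) (ey (Suc n - i)))"
      by (simp only: sum.atMost_Suc) simp
    also have "\<dots> = (\<Sum>i\<le>n. cst (of_nat (Suc (n - i))) * B (ex i) (ey (Suc (n - i))))"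
      by (rule sum.cong[OF refl]) (simp only: Suc_diff_le atMost_iff)
    finally show ?thesis by simp
  qed
  have "(\<Sum>i\<le>n. cst (of_nat (Suc i)) * B (ex (Suc i)) (ey (n - i))
        + cst (of_nat (Suc (n - i))) * B (ex i) (ey (Suc (n - i))))
     = (\<Sum>i\<le>Suc n. cst (of_nat i) * B (ex i) (ey (Suc n - i)) + cst (of_nat (Suc n - i)) * B (ex i) (ey (Suc n - i)))"
    by (simp only: sum.distrib s1 s2)
  also have "\<dots> = (\<Sum>i\<le>Suc n. cst (of_nat (Suc n)) * B (ex i) (ey (Suc n - i)))"
  proof (rule sum.cong[OF refl])
    fix i assume "i \<in> {..Suc n}"
    then have "of_nat i + of_nat (Suc n - i) = (of_nat (Suc n) :: complex)"
      by (simp flip: of_nat_add)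
    then show "cst (of_nat i) * B (ex i) (ey (Suc n - i)) + cst (of_nat (Suc n - i)) * B (ex i) (ey (Suc n - i))
        = cst (of_nat (Suc n)) * B (ex i) (ey (Suc n - i))"
      by (metis cst_add distrib_right)
  qed
  finally show ?thesis by (simp only: sum_distrib_left)
qed

lemma et_B:
  assumes leib: "\<And>x y. pb F (B x y) = B (pb F x) y + B x (pb F y)"
  shows "et F (B x y) n = (\<Sum>i\<le>n. B (et F x i) (et F y (n - i)))"
proof (induction n)
  case 0 then show ?case by (simp add: et_def)
next
  case (Suc n)
  have "et F (B x y) (Suc n) = cst (1 / of_nat (Suc n)) * pb F (\<Sum>i\<le>n. B (et F x i) (et F y (n - i)))"
    by (simp only: et_Suc Suc)
  also have "pb F (\<Sum>i\<le>n. B (et F x i) (et F y (n - i)))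
     = (\<Sum>i\<le>n. cst (of_nat (Suc i)) * B (et F x (Suc i)) (et F y (n - i))
        + cst (of_nat (Suc (n - i))) * B (et F x i) (et F y (Suc (n - i))))"
    by (simp only: pb_sum_right leib D_et cst1 cst2)
  also have "\<dots> = cst (of_nat (Suc n)) * (\<Sum>i\<le>Suc n. B (et F x i) (et F y (Suc n - i)))"
    by (rule Pk_step)
  finally show ?case by (simp add: cst_cst del: of_nat_Suc)
qed

lemma expo_B:
  assumes F3: "ordge 3 F" and leib: "\<And>x y. pb F (B x y) = B (pb F x) y + B x (pb F y)"
  shows "expo F (B x y) = B (expo F x) (expo F y)"
proof (rule A_eqI)
  fix m :: "'n mon"
  define N where "N = deg m + c"
  define Sx where "Sx = (\<Sum>k\<le>N. et F x k)"
  define Sy where "Sy = (\<Sum>k\<le>N. et F y k)"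
  define Rx where "Rx = expo F x - Sx"
  define Ry where "Ry = expo F y - Sy"
  have Rx: "ordge (Suc N) Rx" unfolding Rx_def Sx_def by (rule expo_trunc[OF F3])
  have Ry: "ordge (Suc N) Ry" unfolding Ry_def Sy_def by (rule expo_trunc[OF F3])
  have "B (expo F x) (expo F y) = B (Sx + Rx) (Sy + Ry)" by (simp add: Rx_def Ry_def)
  also have "\<dots> = B Sx Sy + B Rx (Sy + Ry) + B Sx Ry" by (simp add: add1 add2 algebra_simps)
  finally have "B (expo F x) (expo F y) = B Sx Sy + B Rx (Sy + Ry) + B Sx Ry" .
  moreover have "ordge (Suc (deg m)) (B Rx (Sy + Ry))"
    using ord[OF Rx ordge_0[of "Sy + Ry"]] by (simp add: N_def)
  moreover have "ordge (Suc (deg m)) (B Sx Ry)"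
    using ord[OF ordge_0[of Sx] Ry] by (simp add: N_def)
  ultimately have "coef (B (expo F x) (expo F y)) m = coef (B Sx Sy) m"
    by (simp add: ordgeD)
  also have "\<dots> = (\<Sum>i\<le>N. \<Sum>j\<le>N. coef (B (et F x i) (et F y j)) m)"
    by (simp only: Sx_def Sy_def sum1 sum2 coef_sum) (rule sum.swap)
  also have "\<dots> = (\<Sum>(i,j)\<in>{..N}\<times>{..N}. coef (B (et F x i) (et F y j)) m)"
    by (simp add: sum.cartesian_product)
  also have "\<dots> = (\<Sum>(i,j)\<in>{(i,j). i + j \<le> N}. coef (B (et F x i) (et F y j)) m)"
  proof (rule sum.mono_neutral_right)
    show "finite ({..N} \<times> {..N})" by simp
    show "{(i,j). i + j \<le> N} \<subseteq> {..N} \<times> {..N}" by auto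
    show "\<forall>p\<in>{..N} \<times> {..N} - {(i,j). i + j \<le> N}. (case p of (i,j) \<Rightarrow> coef (B (et F x i) (et F y j)) m) = 0"
    proof
      fix p assume p: "p \<in> {..N} \<times> {..N} - {(i,j). i + j \<le> N}"
      obtain i j where ij: "p = (i,j)" "N < i + j" using p by auto
      have "ordge (i + j - c) (B (et F x i) (et F y j))" by (rule ord[OF ordge_et[OF F3] ordge_et[OF F3]])
      moreover have "deg m < i + j - c" using ij by (simp add: N_def)
      ultimately show "(case p of (i,j) \<Rightarrow> coef (B (et F x i) (et F y j)) m) = 0"
        unfolding ij by (simp add: ordgeD)
    qed
  qed
  also have "\<dots> = (\<Sum>k\<le>N. \<Sum>i\<le>k. coef (B (et F x i) (et F y (k - i))) m)"
    by (rule sum.triangle_reindex_eq)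
  also have "\<dots> = (\<Sum>k\<le>N. coef (et F (B x y) k) m)"
    by (simp add: et_B[OF leib])
  also have "\<dots> = coef (expo F (B x y)) m"
    by (rule coef_expo[symmetric, OF F3]) (simp add: N_def)
  finally show "coef (expo F (B x y)) m = coef (B (expo F x) (expo F y)) m" by simp
qed

end

interpretation bl_mult: bilin "(*)" 0
  by unfold_locales (simp_all add: algebra_simps ordge_mult)

interpretation bl_pb: bilin pb 2
  by unfold_locales (simp_all add: pb_add_left pb_add_right pb_cst_left pb_cst_right ordge_pb)

lemma expo_mult: "ordge 3 F \<Longrightarrow> expo F (x * y) = expo F x * expo F y"
  by (rule bl_mult.expo_B, assumption, rule pb_mult_right)

lemma expo_pb: "ordge 3 F \<Longrightarrow> expo F (pb x y) = pb (expo F x) (expo F y)"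
  by (rule bl_pb.expo_B, assumption, rule jacobi)



lemma square_to_triangle:
  fixes g :: "nat \<Rightarrow> nat \<Rightarrow> 'a::comm_monoid_add"
  assumes "\<And>a b. N < a + b \<Longrightarrow> g a b = 0"
  shows "(\<Sum>a\<le>N. \<Sum>b\<le>N. g a b) = (\<Sum>n\<le>N. \<Sum>a\<le>n. g a (n - a))"
proof -
  have "(\<Sum>a\<le>N. \<Sum>b\<le>N. g a b) = (\<Sum>(a,b)\<in>{..N}\<times>{..N}. g a b)"
    by (simp add: sum.cartesian_product)
  also have "\<dots> = (\<Sum>(a,b)\<in>{(a,b). a + b \<le> N}. g a b)"
    by (rule sum.mono_neutral_right) (auto, metis assms not_le)
  also have "\<dots> = (\<Sum>n\<le>N. \<Sum>a\<le>n. g a (n - a))"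
    by (rule sum.triangle_reindex_eq)
  finally show ?thesis .
qed

lemma alt_fact_sum: "(\<Sum>a\<le>n. (-1)^a / (fact a * fact (n - a))) = (if n = 0 then 1 else (0::complex))"
proof (cases "n = 0")
  case False
  have "(\<Sum>a\<le>n. (-1)^a / (fact a * fact (n - a))) = (\<Sum>a\<le>n. (1 / fact n) * ((-1)^a * of_nat (n choose a)) :: complex)"
  proof (rule sum.cong[OF refl])
    fix a assume "a \<in> {..n}"
    then have "of_nat (n choose a) = (fact n / (fact a * fact (n - a)) :: complex)"
      by (simp add: binomial_fact)
    then show "(-1)^a / (fact a * fact (n - a)) = (1 / fact n) * ((-1)^a * of_nat (n choose a) :: complex)"
      by simp
  qed
  also have "\<dots> = (1 / fact n) * (\<Sum>a\<le>n. (-1)^a * of_nat (n choose a) :: complex)"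
    by (rule sum_distrib_left[symmetric])
  also have "\<dots> = 0" using False by (simp add: choose_alternating_sum)
  finally show ?thesis using False by simp
qed simp

lemma cst_uminus: "cst (- a) = - cst a"
  by (rule A_eqI) (simp add: coef_cst)

lemma Dk_neg: "(pb (- F) ^^ k) Y = cst ((-1)^k) * (pb F ^^ k) Y"
proof (induction k)
  case 0 then show ?case by simp
next
  case (Suc k)
  have "pb (- F) (cst ((-1)^k) * (pb F ^^ k) Y) = cst (- ((-1)^k)) * pb F ((pb F ^^ k) Y)"
    by (simp add: pb_uminus_left pb_cst_right cst_uminus)
  then show ?case by (simp add: Suc)
qed

lemma expo_inv:
  fixes F :: "('n::finite) A"
  assumes F3: "ordge 3 F"
  shows "expo (- F) (expo F X) = X"
proof (rule A_eqI)
  fix m :: "'n mon"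
  define N where "N = deg m"
  define S where "S = (\<Sum>b\<le>N. et F X b)"
  define R where "R = expo F X - S"
  have F3': "ordge 3 (- F)" using F3 by simp
  have R: "ordge (Suc N) R" unfolding R_def S_def by (rule expo_trunc[OF F3])
  have DkX: "ordge k ((pb F ^^ k) X)" for k using ordge_Dk[OF F3 ordge_0[of X], of k] by simp
  have "coef (expo (- F) (expo F X)) m = (\<Sum>a\<le>N. coef (et (- F) (S + R) a) m)"
    by (simp add: coef_expo[OF F3', where N=N] N_def R_def)
  also have "\<dots> = (\<Sum>a\<le>N. \<Sum>b\<le>N. (-1)^a / (fact a * fact b) * coef ((pb F ^^ (a + b)) X) m)"
  proof (rule sum.cong[OF refl])
    fix a
    have "coef ((pb F ^^ a) R) m = 0"
      using ordge_Dk[OF F3 R, of a] by (rule ordgeD) (simp add: N_def)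
    moreover have "(pb F ^^ a) S = (\<Sum>b\<le>N. cst (1 / fact b) * (pb F ^^ (a + b)) X)"
      by (simp add: S_def et_def Dk_sum Dk_cst funpow_add)
    ultimately show "coef (et (- F) (S + R) a) m = (\<Sum>b\<le>N. (-1)^a / (fact a * fact b) * coef ((pb F ^^ (a + b)) X) m)"
      by (simp add: et_def Dk_neg Dk_add sum_distrib_left)
  qed
  also have "\<dots> = (\<Sum>n\<le>N. \<Sum>a\<le>n. (-1)^a / (fact a * fact (n - a)) * coef ((pb F ^^ (a + (n - a))) X) m)"
  proof (rule square_to_triangle)
    fix a b assume "N < a + b"
    then show "(-1)^a / (fact a * fact b) * coef ((pb F ^^ (a + b)) X) m = 0"
      using DkX[of "a + b"] by (simp add: ordgeD N_def)
  qed
  also have "\<dots> = (\<Sum>n\<le>N. \<Sum>a\<le>n. (-1)^a / (fact a * fact (n - a)) * coef ((pb F ^^ n) X) m)"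
    by (intro sum.cong refl) auto
  also have "\<dots> = (\<Sum>n\<le>N. (if n = 0 then 1 else 0) * coef ((pb F ^^ n) X) m)"
    by (simp only: sum_distrib_right[symmetric] alt_fact_sum)
  also have "\<dots> = (\<Sum>n\<le>N. if n = 0 then coef ((pb F ^^ n) X) m else 0)"
    by (intro sum.cong refl) simp
  also have "\<dots> = coef X m" by simp
  finally show "coef (expo (- F) (expo F X)) m = coef X m" .
qed



definition mkA :: "('n::finite) ps \<Rightarrow> 'n A" where "mkA = Abs_A"
lemma coef_mkA[simp]: "coef (mkA f) m = f m"
  by (simp add: mkA_def coef_def Abs_A_inverse)

definition pqA :: "'n \<Rightarrow> ('n::finite) A" where "pqA i = xv (Pv i) * xv (Qv i)"

lemma pb_xv_P: "pb G (xv (Pv j)) = dv (Qv j) G"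
proof -
  have "pb G (xv (Pv j)) = (\<Sum>i\<in>UNIV. if i = j then dv (Qv j) G else 0)"
    unfolding pb_def by (intro sum.cong refl) (auto simp: dv_xv)
  then show ?thesis by simp
qed

lemma pb_xv_Q: "pb G (xv (Qv j)) = - dv (Pv j) G"
proof -
  have "pb G (xv (Qv j)) = (\<Sum>i\<in>UNIV. if i = j then - dv (Pv j) G else 0)"
    unfolding pb_def by (intro sum.cong refl) (auto simp: dv_xv)
  then show ?thesis by simp
qed

lemma pb_pqA: "pb G (pqA j) = ev (Qv j) G - ev (Pv j) G"
  by (simp add: pqA_def pb_mult_right pb_xv_P pb_xv_Q flip: xv_dv)

definition om :: "('n \<Rightarrow> complex) \<Rightarrow> ('n::finite) mon \<Rightarrow> complex" where
  "om \<alpha> m = (\<Sum>i\<in>UNIV. \<alpha> i * (of_nat (m (Qv i)) - of_nat (m (Pv i))))"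

definition H2 :: "('n \<Rightarrow> complex) \<Rightarrow> ('n::finite) A" where
  "H2 \<alpha> = (\<Sum>i\<in>UNIV. cst (\<alpha> i) * pqA i)"

lemma coef_pb_H2: "coef (pb G (H2 \<alpha>)) m = om \<alpha> m * coef G m"
proof -
  have "coef (pb G (H2 \<alpha>)) m = (\<Sum>i\<in>UNIV. coef (cst (\<alpha> i) * pb G (pqA i)) m)"
    by (simp only: H2_def pb_sum_right pb_cst_right coef_sum)
  also have "\<dots> = (\<Sum>i\<in>UNIV. \<alpha> i * (of_nat (m (Qv i)) - of_nat (m (Pv i))) * coef G m)"
    by (intro sum.cong refl) (simp add: pb_pqA coef_ev algebra_simps)
  also have "\<dots> = om \<alpha> m * coef G m" by (simp add: om_def sum_distrib_right)
  finally show ?thesis .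
qed

definition offd :: "('n::finite) mon \<Rightarrow> bool" where
  "offd m \<longleftrightarrow> (\<exists>i. m (Qv i) \<noteq> m (Pv i))"

definition hs :: "('n \<Rightarrow> complex) \<Rightarrow> ('n::finite) A \<Rightarrow> 'n A" where
  "hs \<alpha> X = mkA (\<lambda>m. if offd m then - coef X m / om \<alpha> m else 0)"

definition offp :: "('n::finite) A \<Rightarrow> 'n A" where
  "offp X = mkA (\<lambda>m. if offd m then coef X m else 0)"

lemma hom_hs: "hom d X \<Longrightarrow> hom d (hs \<alpha> X)"
  by (simp add: hom_def hs_def)

lemma pb_hs:
  assumes "\<And>m. offd m \<Longrightarrow> om \<alpha> m \<noteq> 0"
  shows "pb (hs \<alpha> X) (H2 \<alpha>) = - offp X"
  by (rule A_eqI) (simp add: coef_pb_H2 hs_def offp_def assms)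

lemma hom_pb_H2: "hom d G \<Longrightarrow> hom d (pb G (H2 \<alpha>))"
  by (simp add: hom_def coef_pb_H2)



lemma cvg_uminus: "cvg F \<Longrightarrow> cvg (\<lambda>k. - F k)"
  by (simp add: cvg_def)

lemma cvg_diff: "cvg F \<Longrightarrow> cvg G \<Longrightarrow> cvg (\<lambda>k. F k - G k)"
  using cvg_add[of F "\<lambda>k. - G k"] cvg_uminus[of G] by simp

lemma isum_uminus: "isum (\<lambda>k. - F k) = - isum F"
  by (rule A_eqI) (simp add: coef_isum sum_negf)

lemma isum_diff: "cvg F \<Longrightarrow> cvg G \<Longrightarrow> isum (\<lambda>k. F k - G k) = isum F - isum G"
  using isum_add[of F "\<lambda>k. - G k"] by (simp add: cvg_uminus isum_uminus)

lemma pert: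
  fixes A A' H :: "('n::finite) A"
  assumes A: "ordge 3 A" and A': "ordge 3 A'" and r: "ordge r (A - A')" and H: "ordge 2 H"
  shows "ordge (Suc r) (expo A H - expo A' H - pb (A - A') H)"
proof -
  have Xk: "ordge (2 + k) ((pb A ^^ k) H)" for k by (rule ordge_Dk[OF A H])
  have claim: "ordge (r + k) ((pb A ^^ Suc k) H - (pb A' ^^ Suc k) H)" for k
  proof (induction k)
    case 0
    have "(pb A ^^ Suc 0) H - (pb A' ^^ Suc 0) H = pb (A - A') H" by (simp add: pb_diff_left)
    then show ?case using ordge_pb[OF r H] by simp
  next
    case (Suc k)
    have "(pb A ^^ Suc (Suc k)) H - (pb A' ^^ Suc (Suc k)) H
       = pb (A - A') ((pb A ^^ Suc k) H) + pb A' ((pb A ^^ Suc k) H - (pb A' ^^ Suc k) H)"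
      by (simp add: pb_diff_left pb_diff_right)
    moreover have "ordge (r + Suc k) (pb (A - A') ((pb A ^^ Suc k) H))"
      using ordge_pb[OF r Xk[of "Suc k"]] by (rule ordge_mono) simp
    moreover have "ordge (r + Suc k) (pb A' ((pb A ^^ Suc k) H - (pb A' ^^ Suc k) H))"
      using ordge_pb[OF A' Suc.IH] by (rule ordge_mono) simp
    ultimately show ?case by (simp add: ordge_add)
  qed
  define D where "D k = et A H k - et A' H k" for k
  have "expo A H - expo A' H = isum D"
    unfolding expo_def D_def by (rule isum_diff[symmetric]) (auto intro: cvg_et A A')
  also have "\<dots> = (\<Sum>k\<le>1. D k) + isum (\<lambda>k. if k \<le> 1 then 0 else D k)"
  proof (rule isum_split)
    have "D = (\<lambda>k. et A H k - et A' H k)" by (simp add: D_def fun_eq_iff)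
    then show "cvg D" by (simp add: cvg_diff cvg_et A A')
  qed
  finally have e: "expo A H - expo A' H = (\<Sum>k\<le>1. D k) + isum (\<lambda>k. if k \<le> 1 then 0 else D k)" .
  have "(\<Sum>k\<le>1. D k) = pb (A - A') H"
    by (simp add: D_def et_def pb_diff_left)
  moreover have "ordge (Suc r) (isum (\<lambda>k. if k \<le> 1 then 0 else D k))"
  proof (rule ordge_isum)
    fix k
    show "ordge (Suc r) (if k \<le> 1 then 0 else D k)"
    proof (cases "k \<le> 1")
      case False
      then obtain j where j: "k = Suc (Suc j)" by (metis Suc_le_D not_less_eq_eq One_nat_def)
      have "ordge (r + Suc j) ((pb A ^^ k) H - (pb A' ^^ k) H)" using claim[of "Suc j"] j by simp
      then have "ordge (Suc r) ((pb A ^^ k) H - (pb A' ^^ k) H)" by (rule ordge_mono) simp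
      then show ?thesis using False by (simp add: D_def et_def ordge_cst_mult flip: right_diff_distrib)
    qed simp
  qed
  ultimately show ?thesis using e by simp
qed



fun TT :: "('n \<Rightarrow> complex) \<Rightarrow> ('n::finite) A \<Rightarrow> nat \<Rightarrow> 'n A" where
  "TT \<alpha> H 0 = 0"
| "TT \<alpha> H (Suc d) = TT \<alpha> H d + (if 3 \<le> Suc d then hs \<alpha> (part (Suc d) (expo (TT \<alpha> H d) H)) else 0)"

definition GG :: "('n \<Rightarrow> complex) \<Rightarrow> ('n::finite) A \<Rightarrow> nat \<Rightarrow> 'n A" where
  "GG \<alpha> H d = (if 3 \<le> Suc d then hs \<alpha> (part (Suc d) (expo (TT \<alpha> H d) H)) else 0)"

definition FF :: "('n \<Rightarrow> complex) \<Rightarrow> ('n::finite) A \<Rightarrow> 'n A" where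
  "FF \<alpha> H = isum (GG \<alpha> H)"

lemma TT_Suc: "TT \<alpha> H (Suc d) = TT \<alpha> H d + GG \<alpha> H d"
  by (simp add: GG_def)

lemma hom_GG: "hom (Suc d) (GG \<alpha> H d)"
  by (simp add: GG_def hom_hs hom_part)

lemma ordge3_GG: "ordge 3 (GG \<alpha> H d)"
proof (cases "3 \<le> Suc d")
  case True
  then show ?thesis using hom_ordge[OF hom_GG[of d \<alpha> H]] by (rule_tac ordge_mono) auto
qed (simp add: GG_def)

lemma TT_sum: "TT \<alpha> H d = (\<Sum>k<d. GG \<alpha> H k)"
  by (induction d) (simp_all only: TT_Suc TT.simps(1) sum.lessThan_Suc lessThan_0 sum.empty)

lemma ordge3_TT: "ordge 3 (TT \<alpha> H d)"
  by (simp add: TT_sum ordge_sum ordge3_GG)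

lemma cvg_GG: "cvg (GG \<alpha> H)"
  by (rule cvgI_shift[where c=0]) (simp, rule ordge_mono[OF hom_ordge[OF hom_GG]], simp)

lemma ordge3_FF: "ordge 3 (FF \<alpha> H)"
  by (simp add: FF_def ordge_isum ordge3_GG)

lemma FF_TT: "ordge (Suc d) (FF \<alpha> H - TT \<alpha> H d)"
proof (cases d)
  case 0
  then show ?thesis using ordge3_FF[of \<alpha> H] by (simp add: ordge_mono)
next
  case (Suc N)
  have "FF \<alpha> H = (\<Sum>k\<le>N. GG \<alpha> H k) + isum (\<lambda>k. if k \<le> N then 0 else GG \<alpha> H k)"
    unfolding FF_def by (rule isum_split[OF cvg_GG])
  moreover have "(\<Sum>k\<le>N. GG \<alpha> H k) = TT \<alpha> H d"
    by (simp add: TT_sum Suc lessThan_Suc_atMost)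
  moreover have "ordge (Suc d) (isum (\<lambda>k. if k \<le> N then 0 else GG \<alpha> H k))"
  proof (rule ordge_isum)
    fix k show "ordge (Suc d) (if k \<le> N then 0 else GG \<alpha> H k)"
      using hom_ordge[OF hom_GG[of k \<alpha> H]] Suc by (auto elim: ordge_mono)
  qed
  ultimately show ?thesis by simp
qed

lemma normal_form:
  fixes H :: "('n::finite) A"
  assumes H2: "ordge 2 H" and H3: "ordge 3 (H - H2 \<alpha>)"
    and nr: "\<And>m. offd m \<Longrightarrow> om \<alpha> m \<noteq> 0"
  shows "\<And>m. deg m < 3 \<Longrightarrow> coef (expo (FF \<alpha> H) H) m = coef (H2 \<alpha>) m"
    and "\<And>m. offd m \<Longrightarrow> 3 \<le> deg m \<Longrightarrow> coef (expo (FF \<alpha> H) H) m = 0"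
proof -
  let ?F = "FF \<alpha> H"
  fix m :: "'n mon"
  assume m: "deg m < 3"
  have "ordge (Suc 3) (expo ?F H - expo 0 H - pb (?F - 0) H)"
    by (rule pert[OF ordge3_FF _ _ H2]) (simp_all add: ordge3_FF)
  moreover have "expo 0 H = H" by (rule expo_const) simp_all
  moreover have "ordge 3 (pb ?F H)" using ordge_pb[OF ordge3_FF H2] by simp
  ultimately have "coef (expo ?F H) m = coef H m" using m by (auto dest!: ordgeD[of _ _ m])
  also have "\<dots> = coef (H2 \<alpha>) m" using ordgeD[OF H3 m] by simp
  finally show "coef (expo ?F H) m = coef (H2 \<alpha>) m" .
next
  let ?F = "FF \<alpha> H"
  fix m :: "'n mon"
  assume off: "offd m" and d3: "3 \<le> deg m"
  define d where "d = deg m"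
  have "d \<noteq> 0" using d3 d_def by simp
  then obtain e where e: "d = Suc e" using not0_implies_Suc by blast
  have "ordge (Suc (Suc d)) (expo ?F H - expo (TT \<alpha> H d) H - pb (?F - TT \<alpha> H d) H)"
    by (rule pert[OF ordge3_FF ordge3_TT FF_TT H2])
  moreover have "ordge (Suc d) (pb (?F - TT \<alpha> H d) H)"
    using ordge_pb[OF FF_TT H2] by simp
  ultimately have s1: "coef (expo ?F H) m = coef (expo (TT \<alpha> H d) H) m"
    by (auto dest!: ordgeD[of _ _ m] simp: d_def)
  have GG: "TT \<alpha> H (Suc e) - TT \<alpha> H e = GG \<alpha> H e" by (simp only: TT_Suc add_diff_cancel_left')
  have "ordge (Suc (Suc e)) (expo (TT \<alpha> H (Suc e)) H - expo (TT \<alpha> H e) H - pb (GG \<alpha> H e) H)"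
  proof -
    have o: "ordge (Suc e) (TT \<alpha> H (Suc e) - TT \<alpha> H e)" using GG hom_ordge[OF hom_GG[of e \<alpha> H]] by simp
    show ?thesis using pert[OF ordge3_TT ordge3_TT o H2] GG by simp
  qed
  moreover have "ordge (Suc (Suc e)) (pb (GG \<alpha> H e) (H - H2 \<alpha>))"
    using ordge_pb[OF hom_ordge[OF hom_GG] H3, of e \<alpha> H] by simp
  moreover have "pb (GG \<alpha> H e) H = pb (GG \<alpha> H e) (H2 \<alpha>) + pb (GG \<alpha> H e) (H - H2 \<alpha>)"
    by (simp add: pb_diff_right)
  ultimately have s2: "coef (expo (TT \<alpha> H (Suc e)) H) m = coef (expo (TT \<alpha> H e) H) m + coef (pb (GG \<alpha> H e) (H2 \<alpha>)) m"
    using e by (auto dest!: ordgeD[of _ _ m] simp: d_def algebra_simps)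
  have "GG \<alpha> H e = hs \<alpha> (part (Suc e) (expo (TT \<alpha> H e) H))"
    using d3 e by (simp add: GG_def d_def)
  then have "coef (pb (GG \<alpha> H e) (H2 \<alpha>)) m = - coef (expo (TT \<alpha> H e) H) m"
    using off e by (simp add: pb_hs nr offp_def coef_part d_def)
  then show "coef (expo ?F H) m = 0" using s1 s2 e by simp
qed



definition lamA :: "('n::finite) A \<Rightarrow> bool" where
  "lamA c \<longleftrightarrow> (\<forall>m. coef c m \<noteq> 0 \<longrightarrow> (\<forall>i. m (Qv i) = 0 \<and> m (Pv i) = 0))"

definition genA :: "'n \<Rightarrow> ('n::finite) A" where "genA i = pqA i - xv (Lam i)"

definition decP :: "nat \<Rightarrow> ('n::finite) A \<Rightarrow> 'n A \<times> ('n \<Rightarrow> 'n A) \<times> ('n \<times> 'n \<Rightarrow> 'n A) \<Rightarrow> bool" where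
  "decP d Y t \<longleftrightarrow> (case t of (L, G, B) \<Rightarrow>
      lamA L \<and> hom d L \<and> (\<forall>i. lamA (G i) \<and> hom (d - 2) (G i)) \<and> (\<forall>p. hom (d - 4) (B p))
      \<and> Y = L + (\<Sum>i\<in>UNIV. G i * pqA i) + (\<Sum>p\<in>UNIV. B p * (genA (fst p) * genA (snd p))))"

definition dec :: "nat \<Rightarrow> ('n::finite) A \<Rightarrow> bool" where "dec d Y \<longleftrightarrow> (\<exists>t. decP d Y t)"

lemma lamA_zero[simp]: "lamA 0" by (simp add: lamA_def)
lemma lamA_add: "lamA x \<Longrightarrow> lamA y \<Longrightarrow> lamA (x + y)"
  by (auto simp: lamA_def) (metis add.right_neutral add_0)+
lemma lamA_uminus: "lamA x \<Longrightarrow> lamA (- x)" by (simp add: lamA_def)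
lemma lamA_cst_mult: "lamA x \<Longrightarrow> lamA (cst c * x)" by (simp add: lamA_def)

lemma dec_zero: "dec d 0"
  unfolding dec_def decP_def
  by (rule exI[of _ "(0, \<lambda>_. 0, \<lambda>_. 0)"]) simp

lemma dec_add: "dec d x \<Longrightarrow> dec d y \<Longrightarrow> dec d (x + y)"
  unfolding dec_def
proof (elim exE)
  fix t s assume t: "decP d x t" and s: "decP d y s"
  obtain L1 G1 B1 where t': "t = (L1, G1, B1)" by (cases t) auto
  obtain L2 G2 B2 where s': "s = (L2, G2, B2)" by (cases s) auto
  show "\<exists>t. decP d (x + y) t"
    apply (rule exI[of _ "(L1 + L2, \<lambda>i. G1 i + G2 i, \<lambda>p. B1 p + B2 p)"])
    using t s unfolding t' s' decP_def
    by (auto simp: lamA_add hom_add distrib_right sum.distrib algebra_simps)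
qed

lemma dec_cst_mult: "dec d x \<Longrightarrow> dec d (cst c * x)"
  unfolding dec_def
proof (elim exE)
  fix t assume t: "decP d x t"
  obtain L1 G1 B1 where t': "t = (L1, G1, B1)" by (cases t) auto
  show "\<exists>t. decP d (cst c * x) t"
    apply (rule exI[of _ "(cst c * L1, \<lambda>i. cst c * G1 i, \<lambda>p. cst c * B1 p)"])
    using t unfolding t' decP_def
    by (auto simp: lamA_cst_mult hom_cst_mult distrib_left sum_distrib_left mult.assoc)
qed

lemma dec_uminus: "dec d x \<Longrightarrow> dec d (- x)"
  using dec_cst_mult[of d x "-1"] by (simp add: cst_uminus)

lemma dec_diff: "dec d x \<Longrightarrow> dec d y \<Longrightarrow> dec d (x - y)"
  using dec_add[of d x "- y"] dec_uminus by auto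

lemma dec_sum: "(\<And>k. k \<in> S \<Longrightarrow> dec d (F k)) \<Longrightarrow> dec d (sum F S)"
  by (induction S rule: infinite_finite_induct) (auto intro: dec_add dec_zero)

section \<open>Monomials\<close>

definition QS :: "('n::finite) mon \<Rightarrow> nat" where "QS m = (\<Sum>i\<in>UNIV. m (Qv i))"
definition qq :: "'n \<Rightarrow> 'n mon" where "qq i = ee (Pv i) + ee (Qv i)"

lemma deg_ee: "deg (ee v) = wt v"
proof -
  have "deg (ee v) = (\<Sum>va\<in>UNIV. if va = v then wt va else 0)"
    unfolding deg_def ee_def by (rule sum.cong) auto
  then show ?thesis by simp
qed

lemma deg_qq: "deg (qq i) = 2" by (simp add: qq_def deg_add deg_ee)
lemma deg_lam: "deg (ee (Lam i)) = 2" by (simp add: deg_ee wt_def)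

lemma QS_add: "QS (a + b) = QS a + QS b" by (simp add: QS_def sum.distrib)
lemma QS_qq: "QS (qq i) = 1" by (simp add: QS_def qq_def ee_def)
lemma QS_lam: "QS (ee (Lam i)) = 0" by (simp add: QS_def ee_def)

lemma pqA_mo: "pqA i = mo (qq i)" by (simp add: pqA_def xv_def qq_def mo_mult)

lemma diag_add: "\<not> offd a \<Longrightarrow> \<not> offd b \<Longrightarrow> \<not> offd (a + b)" by (simp add: offd_def)
lemma diag_qq: "\<not> offd (qq i)" by (simp add: offd_def qq_def ee_def)
lemma diag_lam: "\<not> offd (ee (Lam i))" by (simp add: offd_def ee_def)

lemma lamA_mo: "QS m = 0 \<Longrightarrow> \<not> offd m \<Longrightarrow> lamA (mo m)"
  by (auto simp: lamA_def coef_mo QS_def offd_def)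

lemma hom_mo': "hom (deg m) (mo m)" by (rule hom_mo)

lemma split_qq:
  assumes "\<not> offd m" "QS m \<noteq> 0"
  shows "\<exists>i m1. m = m1 + qq i \<and> \<not> offd m1 \<and> QS m1 = QS m - 1 \<and> deg m1 = deg m - 2"
proof -
  obtain i where i: "m (Qv i) \<noteq> 0" using assms(2) by (auto simp: QS_def)
  then have le: "qq i \<le> m" using assms(1) by (auto simp: qq_def ee_def le_fun_def offd_def)
  define m1 where "m1 = m - qq i"
  have m: "m = m1 + qq i" using mon_add_diff[OF le] by (simp add: m1_def add.commute)
  have "\<not> offd m1"
  proof
    assume "offd m1"
    then obtain k where "m1 (Qv k) \<noteq> m1 (Pv k)" by (auto simp: offd_def)
    moreover have "m (Qv k) = m (Pv k)" using assms(1) by (auto simp: offd_def)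
    ultimately show False using m by (auto simp: qq_def ee_def)
  qed
  moreover have "QS m1 = QS m - 1" using m by (simp add: QS_add QS_qq)
  moreover have "deg m1 = deg m - 2" using m by (simp add: deg_add deg_qq)
  ultimately show ?thesis using m by blast
qed

lemma pq_pq: "pqA i * pqA j = genA i * genA j + xv (Lam i) * pqA j + xv (Lam j) * pqA i - xv (Lam i) * xv (Lam j)"
  by (simp add: genA_def algebra_simps)

lemma dec_mo: "\<not> offd m \<Longrightarrow> dec (deg m) (mo m)"
proof (induction "QS m" arbitrary: m rule: less_induct)
  case less
  show ?case
  proof (cases "QS m = 0")
    case True
    show ?thesis unfolding dec_def decP_def
      by (rule exI[of _ "(mo m, \<lambda>_. 0, \<lambda>_. 0)"]) (simp add: lamA_mo True less.prems hom_mo)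
  next
    case False
    obtain i m1 where m1: "m = m1 + qq i" "\<not> offd m1" "QS m1 = QS m - 1" "deg m1 = deg m - 2"
      using split_qq[OF less.prems False] by blast
    have dm: "deg m = deg m1 + 2" using m1(1) by (simp add: deg_add deg_qq)
    show ?thesis
    proof (cases "QS m1 = 0")
      case True
      have s: "(\<Sum>k\<in>UNIV. (if k = i then mo m1 else 0) * pqA k) = mo m1 * pqA i"
      proof -
        have "(\<Sum>k\<in>UNIV. (if k = i then mo m1 else 0) * pqA k) = (\<Sum>k\<in>UNIV. if k = i then mo m1 * pqA k else 0)"
          by (rule sum.cong) auto
        then show ?thesis by simp
      qed
      have h: "hom (deg m - 2) (mo m1)" using hom_mo[of m1] dm by simp
      have "mo m = mo m1 * pqA i" by (simp add: m1(1) pqA_mo mo_mult)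
      then show ?thesis unfolding dec_def decP_def
        by (intro exI[of _ "(0, \<lambda>k. if k = i then mo m1 else 0, \<lambda>_. 0)"])
           (simp add: lamA_mo True m1(2) h s)
    next
      case False
      obtain j m2 where m2: "m1 = m2 + qq j" "\<not> offd m2" "QS m2 = QS m1 - 1" "deg m2 = deg m1 - 2"
        using split_qq[OF m1(2) False] by blast
      have dm1: "deg m1 = deg m2 + 2" using m2(1) by (simp add: deg_add deg_qq)
      have mo_m: "mo m = mo m2 * (pqA i * pqA j)"
        by (simp add: m1(1) m2(1) pqA_mo mo_mult add.commute add.left_commute)
      have e: "mo m = mo m2 * (genA i * genA j) + mo (m2 + ee (Lam i) + qq j) + mo (m2 + ee (Lam j) + qq i)
          - mo (m2 + ee (Lam i) + ee (Lam j))"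
        unfolding mo_m pq_pq by (simp add: pqA_mo xv_def mo_mult algebra_simps)
      have qs: "QS m = QS m2 + 2" using m1(1) m2(1) by (simp add: QS_add QS_qq)
      have d1: "dec (deg m) (mo (m2 + ee (Lam i) + qq j))"
      proof -
        have "dec (deg (m2 + ee (Lam i) + qq j)) (mo (m2 + ee (Lam i) + qq j))"
          by (rule less.hyps) (simp_all add: QS_add QS_qq QS_lam qs diag_add diag_qq diag_lam m2(2))
        then show ?thesis by (simp add: deg_add deg_qq deg_lam dm dm1)
      qed
      have d2: "dec (deg m) (mo (m2 + ee (Lam j) + qq i))"
      proof -
        have "dec (deg (m2 + ee (Lam j) + qq i)) (mo (m2 + ee (Lam j) + qq i))"
          by (rule less.hyps) (simp_all add: QS_add QS_qq QS_lam qs diag_add diag_qq diag_lam m2(2))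
        then show ?thesis by (simp add: deg_add deg_qq deg_lam dm dm1)
      qed
      have d3: "dec (deg m) (mo (m2 + ee (Lam i) + ee (Lam j)))"
      proof -
        have "dec (deg (m2 + ee (Lam i) + ee (Lam j))) (mo (m2 + ee (Lam i) + ee (Lam j)))"
          by (rule less.hyps) (simp_all add: QS_add QS_qq QS_lam qs diag_add diag_qq diag_lam m2(2))
        then show ?thesis by (simp add: deg_add deg_qq deg_lam dm dm1)
      qed
      have d0: "dec (deg m) (mo m2 * (genA i * genA j))"
      proof -
        have "(\<Sum>p\<in>UNIV. (if p = (i, j) then mo m2 else 0) * (genA (fst p) * genA (snd p)))
            = mo m2 * (genA i * genA j)"
        proof -
          have "(\<Sum>p\<in>UNIV. (if p = (i, j) then mo m2 else 0) * (genA (fst p) * genA (snd p)))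
            = (\<Sum>p\<in>UNIV. if p = (i, j) then mo m2 * (genA (fst p) * genA (snd p)) else 0)"
            by (rule sum.cong) auto
          then show ?thesis by simp
        qed
        then show ?thesis unfolding dec_def decP_def
          by (intro exI[of _ "(0, \<lambda>_. 0, \<lambda>p. if p = (i, j) then mo m2 else 0)"])
             (simp add: hom_mo dm dm1)
      qed
      show ?thesis unfolding e by (intro dec_add dec_diff d0 d1 d2 d3)
    qed
  qed
qed



lemma part_expand: "part d f = (\<Sum>m\<in>{m. deg m = d}. cst (coef f m) * mo m)"
proof (rule A_eqI)
  fix k
  have "coef (\<Sum>m\<in>{m. deg m = d}. cst (coef f m) * mo m) k = (\<Sum>m\<in>{m. deg m = d}. if k = m then coef f m else 0)"
    unfolding coef_sum coef_cst_mult coef_mo by (rule sum.cong) auto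
  also have "\<dots> = coef (part d f) k"
    by (simp add: coef_part finite_deg_eq)
  finally show "coef (part d f) k = coef (\<Sum>m\<in>{m. deg m = d}. cst (coef f m) * mo m) k" by simp
qed

lemma dec_part: fixes f :: "('n::finite) A" shows "(\<And>m. offd m \<Longrightarrow> coef f m = 0) \<Longrightarrow> dec d (part d f)"
  unfolding part_expand
proof (rule dec_sum)
  fix m :: "'n mon" assume z: "\<And>m. offd m \<Longrightarrow> coef f m = 0" and m: "m \<in> {m. deg m = d}"
  show "dec d (cst (coef f m) * mo m)"
  proof (cases "offd m")
    case True then show ?thesis using z by (simp add: dec_zero)
  next
    case False then show ?thesis using dec_mo[OF False] m by (simp add: dec_cst_mult)
  qed
qed

lemma lamA_isum: "(\<And>d. lamA (L d)) \<Longrightarrow> lamA (isum L)"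
  unfolding lamA_def coef_isum by (metis (mono_tags, lifting) empty_Collect_eq sum.empty)

lemma cvg_hom: "(\<And>d. hom (d - c) (F d)) \<Longrightarrow> cvg F"
  by (rule cvgI_shift[where c=c]) (rule hom_ordge)

lemma decomp_all:
  fixes f :: "('n::finite) A"
  assumes z: "\<And>m. offd m \<Longrightarrow> coef f m = 0"
  shows "\<exists>L G B. lamA L \<and> (\<forall>i. lamA (G i)) \<and>
     f = L + (\<Sum>i\<in>UNIV. G i * pqA i) + (\<Sum>p\<in>UNIV. B p * (genA (fst p) * genA (snd p)))"
proof -
  have "\<forall>d. \<exists>t. decP d (part d f) t" using dec_part[OF z] by (simp add: dec_def)
  then obtain T where T: "\<And>d. decP d (part d f) (T d)" by metis
  define L where "L d = fst (T d)" for d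
  define G where "G d = fst (snd (T d))" for d
  define B where "B d = snd (snd (T d))" for d
  have T': "lamA (L d) \<and> hom d (L d) \<and> (\<forall>i. lamA (G d i) \<and> hom (d - 2) (G d i)) \<and> (\<forall>p. hom (d - 4) (B d p))
      \<and> part d f = L d + (\<Sum>i\<in>UNIV. G d i * pqA i) + (\<Sum>p\<in>UNIV. B d p * (genA (fst p) * genA (snd p)))" for d
    using T[of d] unfolding decP_def L_def G_def B_def by (auto split: prod.splits)
  have cL: "cvg L" by (rule cvg_hom[where c=0]) (simp add: T')
  have cG: "cvg (\<lambda>d. G d i * pqA i)" for i by (rule cvg_mult, rule cvg_hom[where c=2]) (simp add: T')
  have cB: "cvg (\<lambda>d. B d p * (genA (fst p) * genA (snd p)))" for p by (rule cvg_mult, rule cvg_hom[where c=4]) (simp add: T')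
  have cG': "cvg (\<lambda>d. G d i)" for i by (rule cvg_hom[where c=2]) (simp add: T')
  have cB': "cvg (\<lambda>d. B d p)" for p by (rule cvg_hom[where c=4]) (simp add: T')
  have "f = isum (\<lambda>d. part d f)" by (simp add: isum_parts)
  also have "\<dots> = isum (\<lambda>d. L d + (\<Sum>i\<in>UNIV. G d i * pqA i) + (\<Sum>p\<in>UNIV. B d p * (genA (fst p) * genA (snd p))))"
    using T' by simp
  also have "\<dots> = isum L + isum (\<lambda>d. \<Sum>i\<in>UNIV. G d i * pqA i) + isum (\<lambda>d. \<Sum>p\<in>UNIV. B d p * (genA (fst p) * genA (snd p)))"
  proof -
    have cS1: "cvg (\<lambda>d. \<Sum>i\<in>UNIV. G d i * pqA i)" by (rule cvg_sum) (rule cG)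
    have cS2: "cvg (\<lambda>d. \<Sum>p\<in>UNIV. B d p * (genA (fst p) * genA (snd p)))" by (rule cvg_sum) (rule cB)
    show ?thesis
      by (subst isum_add[OF cvg_add[OF cL cS1] cS2], subst isum_add[OF cL cS1], rule refl)
  qed
  also have "\<dots> = isum L + (\<Sum>i\<in>UNIV. isum (\<lambda>d. G d i) * pqA i) + (\<Sum>p\<in>UNIV. isum (\<lambda>d. B d p) * (genA (fst p) * genA (snd p)))"
    by (simp only: isum_sum[OF cG] isum_sum[OF cB] isum_mult[OF cG'] isum_mult[OF cB'])
  finally have eq: "f = isum L + (\<Sum>i\<in>UNIV. isum (\<lambda>d. G d i) * pqA i) + (\<Sum>p\<in>UNIV. isum (\<lambda>d. B d p) * (genA (fst p) * genA (snd p)))" .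
  have lL: "lamA (isum L)" by (rule lamA_isum) (simp add: T')
  have lG: "lamA (isum (\<lambda>d. G d i))" for i by (rule lamA_isum) (simp add: T')
  show ?thesis
    apply (rule exI[of _ "isum L"], rule exI[of _ "\<lambda>i. isum (\<lambda>d. G d i)"], rule exI[of _ "\<lambda>p. isum (\<lambda>d. B d p)"])
    apply (intro conjI allI)
      apply (rule lL)
     apply (rule lG)
    apply (rule eq)
    done
qed

lemma coef_H2_offd: "offd m \<Longrightarrow> coef (H2 \<alpha>) m = 0"
proof -
  assume "offd m"
  then have "m \<noteq> qq i" for i using diag_qq[of i] by metis
  then show ?thesis by (simp add: H2_def pqA_mo coef_mo)
qed

lemma main_A:
  fixes H :: "('n::finite) A"
  assumes H2: "ordge 2 H" and H3: "ordge 3 (H - H2 \<alpha>)"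
    and nr: "\<And>m. offd m \<Longrightarrow> om \<alpha> m \<noteq> 0"
  shows "\<exists>L G B. lamA L \<and> (\<forall>i. lamA (G i)) \<and>
     expo (FF \<alpha> H) H - (\<Sum>i\<in>UNIV. (cst (\<alpha> i) + G i) * pqA i) = L + (\<Sum>p\<in>UNIV. B p * (genA (fst p) * genA (snd p)))"
proof -
  let ?K = "expo (FF \<alpha> H) H"
  have z: "coef (?K - H2 \<alpha>) m = 0" if "offd m" for m
  proof (cases "deg m < 3")
    case True then show ?thesis using normal_form(1)[OF H2 H3 nr True] by simp
  next
    case False then show ?thesis using normal_form(2)[OF H2 H3 nr that] coef_H2_offd[OF that] by simp
  qed
  obtain L G B where LGB: "lamA L" "\<forall>i. lamA (G i)"
    "?K - H2 \<alpha> = L + (\<Sum>i\<in>UNIV. G i * pqA i) + (\<Sum>p\<in>UNIV. B p * (genA (fst p) * genA (snd p)))"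
    using decomp_all[of "?K - H2 \<alpha>"] z by blast
  have "?K - (\<Sum>i\<in>UNIV. (cst (\<alpha> i) + G i) * pqA i) = (?K - H2 \<alpha>) - (\<Sum>i\<in>UNIV. G i * pqA i)"
    by (simp add: H2_def distrib_right sum.distrib algebra_simps)
  also have "\<dots> = L + (\<Sum>p\<in>UNIV. B p * (genA (fst p) * genA (snd p)))"
    using LGB(3) by simp
  finally show ?thesis using LGB(1,2) by blast
qed



lemma coef_mkA_fun[simp]: "coef (mkA f) = f" by (rule ext) simp
lemma mkA_coef[simp]: "mkA (coef x) = x" by (simp add: mkA_def coef_def Rep_A_inverse)
lemma coef_inj: "coef x = coef y \<Longrightarrow> x = y" by (metis mkA_coef)

lemma R_add: "ps_add (coef x) (coef y) = coef (x + y)" by (simp add: coef_def plus_A.rep_eq)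
lemma R_diff: "ps_diff (coef x) (coef y) = coef (x - y)" by (simp add: coef_def minus_A.rep_eq)
lemma R_mult: "ps_mult (coef x) (coef y) = coef (x * y)" by (simp add: coef_def times_A.rep_eq)
lemma R_sum: "ps_sum (\<lambda>i. coef (F i)) S = coef (sum F S)" by (rule ext) (simp add: ps_sum_def)
lemma R_const: "ps_const c = coef (cst c)" by (simp add: coef_def cst.rep_eq)
lemma R_var: "ps_var v = coef (xv v)" by (simp add: coef_def xv_def mo.rep_eq mono_def ps_var_def ee_def)
lemma R_dv: "ps_deriv v (coef x) = coef (dv v x)" by (simp add: coef_def dv.rep_eq)
lemma R_pq: "pq i = coef (pqA i)" by (simp add: pq_def R_var R_mult pqA_def)
lemma R_gen: "gen i = coef (genA i)" by (simp add: gen_def R_pq R_var R_diff genA_def)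
lemma R_pb: "poisson (coef x) (coef y) = coef (pb x y)"
  by (simp only: poisson_def pb_def R_dv R_mult R_diff R_sum)

lemma mkA_add: "mkA (ps_add f g) = mkA f + mkA g" by (metis R_add coef_mkA_fun mkA_coef)
lemma mkA_mult: "mkA (ps_mult f g) = mkA f * mkA g" by (metis R_mult coef_mkA_fun mkA_coef)
lemma mkA_pb: "mkA (poisson f g) = pb (mkA f) (mkA g)" by (metis R_pb coef_mkA_fun mkA_coef)

lemma lam_iff: "c \<in> lam_series \<longleftrightarrow> lamA (mkA c)"
  by (simp add: lam_series_def lamA_def)

lemma dv_lam1: "lamA X \<Longrightarrow> v = Qv i \<or> v = Pv i \<Longrightarrow> dv v X = 0"
proof (rule A_eqI)
  fix m assume X: "lamA X" and v: "v = Qv i \<or> v = Pv i"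
  have "coef X (m(v := Suc (m v))) = 0"
  proof (rule ccontr)
    assume "coef X (m(v := Suc (m v))) \<noteq> 0"
    then have "\<forall>i. (m(v := Suc (m v))) (Qv i) = 0 \<and> (m(v := Suc (m v))) (Pv i) = 0"
      using X unfolding lamA_def by blast
    then show False using v by (metis fun_upd_same nat.distinct(1))
  qed
  then show "coef (dv v X) m = coef 0 m" by (simp add: coef_dv)
qed

lemma dv_lam: "lamA X \<Longrightarrow> dv (Qv i) X = 0 \<and> dv (Pv i) X = 0"
  using dv_lam1 by blast

lemma pb_lam: "lamA X \<Longrightarrow> pb F X = 0"
  by (simp add: pb_def dv_lam)

lemma hom_H2: "hom 2 (H2 \<alpha>)"
  unfolding H2_def by (intro hom_sum hom_cst_mult) (metis pqA_mo hom_mo deg_qq)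

lemma expo_one: "ordge 3 F \<Longrightarrow> expo F 1 = 1"
  by (rule expo_const) (simp_all add: pb_def)

theorem proposition2:
  fixes H :: "'n::finite ps" and \<alpha> :: "'n \<Rightarrow> complex"
  assumes "eq_plus_o 2 H (ps_sum (\<lambda>i. ps_mult (ps_const (\<alpha> i)) (pq i)) UNIV)"
    and "\<forall>c :: 'n \<Rightarrow> rat. (\<Sum>i\<in>UNIV. of_rat (c i) * \<alpha> i) = 0 \<longrightarrow> (\<forall>i. c i = 0)"
  shows "\<exists>\<phi> g. poisson_aut \<phi> \<and> (\<forall>i. g i \<in> lam_series) \<and>
           (\<exists>a\<in>ideal_I2. \<exists>b\<in>lam_series.
              ps_diff (\<phi> H) (ps_sum (\<lambda>i. ps_mult (ps_add (ps_const (\<alpha> i)) (g i)) (pq i)) UNIV)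
              = ps_add a b)"
proof -
  define HA where "HA = mkA H"
  have R2: "ps_sum (\<lambda>i. ps_mult (ps_const (\<alpha> i)) (pq i)) UNIV = coef (H2 \<alpha>)"
    by (simp only: R_const R_pq R_mult R_sum H2_def)
  have low: "coef HA m = coef (H2 \<alpha>) m" if "deg m \<le> 2" for m
    using assms(1) that unfolding eq_plus_o_def R2 by (simp add: HA_def mon_deg_eq)
  have Hd3: "ordge 3 (HA - H2 \<alpha>)" unfolding ordge_def using low by simp
  have Hd2: "ordge 2 HA" unfolding ordge_def
  proof (intro allI impI)
    fix m :: "'n mon" assume "deg m < 2"
    then show "coef HA m = 0" using low[of m] hom_H2[of \<alpha>] by (simp add: hom_def)
  qed
  have nr: "om \<alpha> m \<noteq> 0" if off: "offd m" for m :: "'n mon"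
  proof
    assume om0: "om \<alpha> m = 0"
    define c where "c i = (of_int (int (m (Qv i)) - int (m (Pv i))) :: rat)" for i
    have "(\<Sum>i\<in>UNIV. of_rat (c i) * \<alpha> i) = om \<alpha> m"
      unfolding om_def c_def by (intro sum.cong refl) (simp add: algebra_simps of_rat_diff)
    then have "\<forall>i. c i = 0" using assms(2) om0 by simp
    then have "\<forall>i. m (Qv i) = m (Pv i)" by (simp add: c_def)
    then show False using off by (simp add: offd_def)
  qed
  define F where "F = FF \<alpha> HA"
  have F3: "ordge 3 F" by (simp add: F_def ordge3_FF)
  have F3': "ordge 3 (- F)" using F3 by simp
  obtain L G B where LGB: "lamA L" "\<forall>i. lamA (G i)"
    "expo F HA - (\<Sum>i\<in>UNIV. (cst (\<alpha> i) + G i) * pqA i) = L + (\<Sum>p\<in>UNIV. B p * (genA (fst p) * genA (snd p)))"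
    using main_A[OF Hd2 Hd3 nr] unfolding F_def by blast
  define \<phi> where "\<phi> f = coef (expo F (mkA f))" for f
  define \<psi> where "\<psi> f = coef (expo (- F) (mkA f))" for f
  have inv1: "\<psi> (\<phi> f) = f" for f by (simp add: \<phi>_def \<psi>_def expo_inv[OF F3])
  have inv2: "\<phi> (\<psi> f) = f" for f using expo_inv[OF F3', of "mkA f"] by (simp add: \<phi>_def \<psi>_def)
  have aut: "poisson_aut \<phi>"
    unfolding poisson_aut_def
  proof (intro conjI allI impI)
    show "bij \<phi>" by (rule bijI') (metis inv1, metis inv2)
    fix f g :: "'n ps"
    show "\<phi> (ps_add f g) = ps_add (\<phi> f) (\<phi> g)" by (simp add: \<phi>_def mkA_add expo_add[OF F3] R_add)
    show "\<phi> (ps_mult f g) = ps_mult (\<phi> f) (\<phi> g)" by (simp add: \<phi>_def mkA_mult expo_mult[OF F3] R_mult)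
    show "\<phi> (poisson f g) = poisson (\<phi> f) (\<phi> g)" by (simp add: \<phi>_def mkA_pb expo_pb[OF F3] R_pb)
  next
    show "\<phi> (ps_const 1) = ps_const 1"
      by (simp add: \<phi>_def R_const expo_one[OF F3])
  next
    fix c f :: "'n ps" assume "c \<in> lam_series"
    then have "lamA (mkA c)" by (simp add: lam_iff)
    then have "expo F (mkA c) = mkA c" by (intro expo_const[OF F3] pb_lam)
    then show "\<phi> (ps_mult c f) = ps_mult c (\<phi> f)"
      by (simp add: \<phi>_def mkA_mult expo_mult[OF F3] R_mult[symmetric])
  qed
  define g where "g i = coef (G i)" for i
  have g: "\<forall>i. g i \<in> lam_series" using LGB(2) by (simp add: g_def lam_iff)
  define a where "a = coef (\<Sum>p\<in>UNIV. B p * (genA (fst p) * genA (snd p)))"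
  define b where "b = coef L"
  have a: "a \<in> ideal_I2"
  proof -
    have "a = ps_sum (\<lambda>(i,j). ps_mult (coef (B (i,j))) (ps_mult (gen i) (gen j))) UNIV"
    proof -
      have "(\<lambda>(i,j). ps_mult (coef (B (i,j))) (ps_mult (gen i) (gen j)))
          = (\<lambda>p. coef (B p * (genA (fst p) * genA (snd p))))"
        by (auto simp: R_gen R_mult)
      then show ?thesis by (simp add: a_def R_sum)
    qed
    then show ?thesis unfolding ideal_I2_def
      by (intro CollectI exI[of _ "\<lambda>i j. coef (B (i,j))"]) simp
  qed
  have b: "b \<in> lam_series" using LGB(1) by (simp add: b_def lam_iff)
  have eq: "ps_diff (\<phi> H) (ps_sum (\<lambda>i. ps_mult (ps_add (ps_const (\<alpha> i)) (g i)) (pq i)) UNIV) = ps_add a b"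
  proof -
    have "ps_diff (\<phi> H) (ps_sum (\<lambda>i. ps_mult (ps_add (ps_const (\<alpha> i)) (g i)) (pq i)) UNIV)
        = coef (expo F HA - (\<Sum>i\<in>UNIV. (cst (\<alpha> i) + G i) * pqA i))"
      by (simp only: \<phi>_def HA_def g_def R_const R_add R_pq R_mult R_sum R_diff)
    also have "\<dots> = coef ((\<Sum>p\<in>UNIV. B p * (genA (fst p) * genA (snd p))) + L)"
      using LGB(3) by (simp add: add.commute)
    also have "\<dots> = ps_add a b" by (simp add: a_def b_def R_add)
    finally show ?thesis .
  qed
  show ?thesis using aut g a b eq by blast
qed


end
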